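(* Let $N\geq2$, $p=4+\frac4N$, let $g$ satisfy (g1) $g\in C(\mathbb{R},\mathbb{R})$; (g2) $\lim_{s\to0}g(s)/s=0$; (g3) $\lim_{|s|\to\infty}|g(s)|/|s|^{p-1}=0$; (g4) there is $s_0>0$ with $G(s_0)>0$, and let $\lambda\in(-\infty,\lambda_0)$. Then $\Gamma_1(\lambda)\neq\emptyset$. If in addition (g5) $g(-s)=-g(s)$ for all $s$ holds, then $\Gamma_k(\lambda)\neq\emptyset$ for every $k\geq1$.
   Context: $G(s)=\int_0^sg(t)dt$. $f\in C^\infty(\mathbb{R})$ is the odd function with $f(0)=0$, $f'(t)=(1+2f(t)^2)^{-1/2}$. $H_r^1(\mathbb{R}^N)$ denotes radial $H^1$ functions. $J_\lambda(v)=\frac12\|\nabla v\|_2^2+\frac{e^\lambda}{2}\|f(v)\|_2^2-\int_{\mathbb{R}^N}G(f(v))dx$. $\lambda_0=\ln(2\sup_{s\neq0}G(s)/s^2)$ if this supremum is finite, $\lambda_0=+\infty$ otherwise. $D_k=\{x\in\mathbb{R}^k:|x|\le1\}$, $\partial D_k=\{|x|=1\}$. $\Gamma_1(\lambda)=\{\gamma\in C([0,1],H_r^1(\mathbb{R}^N)):\gamma(0)=0,\ J_\lambda(\gamma(1))<0\}$; for $k\geq2$, $\Gamma_k(\lambda)=\{\gamma\in C(D_k,H_r^1(\mathbb{R}^N)):\gamma(-\xi)=-\gamma(\xi)\ \forall\xi\in D_k,\ J_\lambda(\gamma(\xi))<0\ \forall\xi\in\partial D_k\}$. *)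

theory Defs
  imports "HOL-Analysis.Analysis"
begin

definition Gprim :: "(real \<Rightarrow> real) \<Rightarrow> real \<Rightarrow> real" where
  "Gprim g s = (LBINT t=0..s. g t)"

definition fcv :: "real \<Rightarrow> real" where
  "fcv = (THE f. f 0 = 0 \<and>
            (\<forall>t. (f has_real_derivative (1 / sqrt (1 + 2 * (f t)\<^sup>2))) (at t)))"

definition lambda0 :: "(real \<Rightarrow> real) \<Rightarrow> ereal" where
  "lambda0 g = (if bdd_above {Gprim g s / s\<^sup>2 | s. s \<noteq> 0}
                then ereal (ln (2 * Sup {Gprim g s / s\<^sup>2 | s. s \<noteq> 0}))
                else \<infinity>)"

text \<open>C^infinity: all iterated partial derivatives exist and are continuous.\<close>
definition smooth_fun :: "('a::euclidean_space \<Rightarrow> real) \<Rightarrow> bool" where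
  "smooth_fun \<phi> \<longleftrightarrow> (\<exists>S. \<phi> \<in> S \<and>
     (\<forall>\<psi>\<in>S. continuous_on UNIV \<psi> \<and>
        (\<forall>i\<in>Basis. \<exists>dphi\<in>S. \<forall>x. ((\<lambda>t. \<psi> (x + t *\<^sub>R i)) has_real_derivative dphi x) (at 0))))"

definition test_fun :: "('a::euclidean_space \<Rightarrow> real) \<Rightarrow> bool" where
  "test_fun \<phi> \<longleftrightarrow> smooth_fun \<phi> \<and> compact (closure {x. \<phi> x \<noteq> 0})"

definition is_weak_grad :: "('a::euclidean_space \<Rightarrow> real) \<Rightarrow> ('a \<Rightarrow> 'a) \<Rightarrow> bool" where
  "is_weak_grad v w \<longleftrightarrow>
     w \<in> borel_measurable lborel \<and> integrable lborel (\<lambda>x. (norm (w x))\<^sup>2) \<and>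
     (\<forall>\<phi> dphi i. test_fun \<phi> \<and> i \<in> Basis \<and>
        (\<forall>x. ((\<lambda>t. \<phi> (x + t *\<^sub>R i)) has_real_derivative dphi x) (at 0)) \<longrightarrow>
        (\<integral>x. v x * dphi x \<partial>lborel) = - (\<integral>x. (w x \<bullet> i) * \<phi> x \<partial>lborel))"

definition H1 :: "('a::euclidean_space \<Rightarrow> real) set" where
  "H1 = {v. v \<in> borel_measurable lborel \<and> integrable lborel (\<lambda>x. (v x)\<^sup>2) \<and>
            (\<exists>w. is_weak_grad v w)}"

definition radial :: "('a::euclidean_space \<Rightarrow> real) \<Rightarrow> bool" where
  "radial v \<longleftrightarrow> (\<forall>x y. norm x = norm y \<longrightarrow> v x = v y)"

definition H1r :: "('a::euclidean_space \<Rightarrow> real) set" where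
  "H1r = {v \<in> H1. radial v}"

definition wgrad :: "('a::euclidean_space \<Rightarrow> real) \<Rightarrow> 'a \<Rightarrow> 'a" where
  "wgrad v = (SOME w. is_weak_grad v w)"

definition grad_sq :: "('a::euclidean_space \<Rightarrow> real) \<Rightarrow> real" where
  "grad_sq v = (\<integral>x. (norm (wgrad v x))\<^sup>2 \<partial>lborel)"

definition H1norm :: "('a::euclidean_space \<Rightarrow> real) \<Rightarrow> real" where
  "H1norm v = sqrt ((\<integral>x. (v x)\<^sup>2 \<partial>lborel) + grad_sq v)"

definition cont_H1r :: "'k::metric_space set \<Rightarrow> ('k \<Rightarrow> 'a::euclidean_space \<Rightarrow> real) \<Rightarrow> bool" where
  "cont_H1r D \<gamma> \<longleftrightarrow> (\<forall>\<xi>\<in>D. \<gamma> \<xi> \<in> H1r) \<and>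
     (\<forall>\<xi>\<in>D. \<forall>\<epsilon>>0. \<exists>\<delta>>0. \<forall>\<eta>\<in>D. dist \<eta> \<xi> < \<delta> \<longrightarrow> H1norm (\<lambda>x. \<gamma> \<eta> x - \<gamma> \<xi> x) < \<epsilon>)"

definition Jfun :: "(real \<Rightarrow> real) \<Rightarrow> real \<Rightarrow> ('a::euclidean_space \<Rightarrow> real) \<Rightarrow> real" where
  "Jfun g lam v = 1/2 * grad_sq v + exp lam / 2 * (\<integral>x. (fcv (v x))\<^sup>2 \<partial>lborel)
                   - (\<integral>x. Gprim g (fcv (v x)) \<partial>lborel)"

definition Gamma1 :: "(real \<Rightarrow> real) \<Rightarrow> real \<Rightarrow> (real \<Rightarrow> 'a::euclidean_space \<Rightarrow> real) set" where
  "Gamma1 g lam = {\<gamma>. cont_H1r {0..1} \<gamma> \<and> \<gamma> 0 = (\<lambda>x. 0) \<and> Jfun g lam (\<gamma> 1) < 0}"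

text \<open>Gamma_k for k = DIM('k) >= 2: D_k is the closed unit ball of 'k.\<close>
definition Gammak :: "(real \<Rightarrow> real) \<Rightarrow> real \<Rightarrow> ('k::euclidean_space \<Rightarrow> 'a::euclidean_space \<Rightarrow> real) set" where
  "Gammak g lam = {\<gamma>. cont_H1r (cball 0 1) \<gamma> \<and>
      (\<forall>\<xi>\<in>cball 0 1. \<gamma> (-\<xi>) = (\<lambda>x. - \<gamma> \<xi> x)) \<and>
      (\<forall>\<xi>\<in>sphere 0 1. Jfun g lam (\<gamma> \<xi>) < 0)}"

end

theory Submission
  imports Defs "HOL-Computational_Algebra.Polynomial" "HOL-Real_Asymp.Real_Asymp"
begin

definition Fi :: "real \<Rightarrow> real" where
  "Fi s = s * sqrt (1 + 2 * s\<^sup>2) / 2 + arsinh (sqrt 2 * s) / (2 * sqrt 2)"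

lemma Fi_deriv: "(Fi has_real_derivative sqrt (1 + 2 * s\<^sup>2)) (at s)"
proof -
  have p: "0 < 1 + 2 * s\<^sup>2" by (simp add: add_pos_nonneg)
  have a: "((\<lambda>s. arsinh (sqrt 2 * s)) has_real_derivative (1 / sqrt ((sqrt 2 * s)\<^sup>2 + 1)) * sqrt 2) (at s)"
    by (rule DERIV_chain2[OF arsinh_real_has_field_derivative]) (auto intro!: derivative_eq_intros)
  have u: "((\<lambda>s. 1 + 2 * s\<^sup>2) has_real_derivative 4 * s) (at s)"
    by (auto intro!: derivative_eq_intros)
  have b: "((\<lambda>s. sqrt (1 + 2 * s\<^sup>2)) has_real_derivative inverse (sqrt (1 + 2 * s\<^sup>2)) / 2 * (4 * s)) (at s)"
    by (rule DERIV_chain2[OF DERIV_real_sqrt[OF p] u])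
  have c: "((\<lambda>s. s * sqrt (1 + 2 * s\<^sup>2) / 2 + arsinh (sqrt 2 * s) / (2 * sqrt 2)) has_real_derivative
     (1 * sqrt (1 + 2 * s\<^sup>2) + (inverse (sqrt (1 + 2 * s\<^sup>2)) / 2 * (4 * s)) * s) / 2 + 
     (1 / sqrt ((sqrt 2 * s)\<^sup>2 + 1)) * sqrt 2 / (2 * sqrt 2)) (at s)"
    by (intro DERIV_add DERIV_cdivide DERIV_mult DERIV_ident a b)
  have e: "(sqrt 2 * s)\<^sup>2 + 1 = 1 + 2 * s\<^sup>2" by (simp add: power_mult_distrib)
  have q: "sqrt (1 + 2 * s\<^sup>2) * sqrt (1 + 2 * s\<^sup>2) = 1 + 2 * s\<^sup>2" using p by simp
  have nz: "sqrt (1 + 2 * s\<^sup>2) \<noteq> 0" using p by simp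
  have "(1 * sqrt (1 + 2 * s\<^sup>2) + (inverse (sqrt (1 + 2 * s\<^sup>2)) / 2 * (4 * s)) * s) / 2 + 
     (1 / sqrt ((sqrt 2 * s)\<^sup>2 + 1)) * sqrt 2 / (2 * sqrt 2) = sqrt (1 + 2 * s\<^sup>2)"
    using nz q unfolding e by (simp add: field_simps power2_eq_square)
  with c show ?thesis unfolding Fi_def[abs_def] by simp
qed

lemma Fi_0[simp]: "Fi 0 = 0" by (simp add: Fi_def)

lemma Fi_odd: "Fi (- s) = - Fi s"
  by (simp add: Fi_def)

lemma Fi_strict_mono: "strict_mono Fi"
proof (rule strict_monoI)
  fix x y :: real assume "x < y"
  show "Fi x < Fi y"
    by (rule DERIV_pos_imp_increasing[OF \<open>x < y\<close>]) (use Fi_deriv in \<open>auto intro!: exI simp: add_pos_nonneg\<close>)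
qed

lemma Fi_ge: assumes "0 \<le> s" shows "s \<le> Fi s"
proof -
  have "(\<lambda>s. Fi s - s) 0 \<le> (\<lambda>s. Fi s - s) s"
    by (rule DERIV_nonneg_imp_nondecreasing[OF assms])
       (auto intro!: exI derivative_eq_intros Fi_deriv)
  then show ?thesis by simp
qed

lemma Fi_cont: "continuous_on S Fi"
  by (meson DERIV_continuous Fi_deriv continuous_at_imp_continuous_on)

lemma Fi_surj: "\<exists>s. Fi s = t"
proof -
  have pos: "\<exists>s. Fi s = t" if "0 \<le> t" for t
  proof -
    have "\<exists>s\<ge>0. s \<le> t \<and> Fi s = t"
      by (rule IVT') (use that Fi_ge[OF that] Fi_cont in auto)
    then show ?thesis by blast
  qed
  show ?thesis
  proof (cases "0 \<le> t")
    case True then show ?thesis using pos by blast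
  next
    case False
    then obtain s where "Fi s = - t" using pos[of "-t"] by auto
    then have "Fi (-s) = t" by (simp add: Fi_odd)
    then show ?thesis by blast
  qed
qed

definition Finv :: "real \<Rightarrow> real" where "Finv = inv Fi"

lemma Fi_Finv[simp]: "Fi (Finv t) = t"
proof -
  have "surj Fi"
    by (rule surjI[where f="\<lambda>t. SOME s. Fi s = t"]) (rule someI_ex[OF Fi_surj])
  then show ?thesis unfolding Finv_def by (rule surj_f_inv_f)
qed

lemma Finv_Fi[simp]: "Finv (Fi s) = s"
  unfolding Finv_def by (rule inv_f_f) (rule strict_mono_imp_inj_on[OF Fi_strict_mono])

lemma Finv_cont: "isCont Finv t"
proof -
  have "isCont Finv (Fi (Finv t))"
    by (rule isCont_inverse_function[where d=1 and f=Fi and g=Finv and x="Finv t"])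
       (auto intro: DERIV_isCont[OF Fi_deriv])
  then show ?thesis by simp
qed

lemma Finv_deriv: "(Finv has_real_derivative 1 / sqrt (1 + 2 * (Finv t)\<^sup>2)) (at t)"
proof -
  have p: "0 < 1 + 2 * (Finv t)\<^sup>2" by (simp add: add_pos_nonneg)
  have "(Finv has_real_derivative inverse (sqrt (1 + 2 * (Finv t)\<^sup>2))) (at t)"
    by (rule DERIV_inverse_function[where a="t-1" and b="t+1", OF Fi_deriv])
       (use p in \<open>auto simp: Finv_cont\<close>)
  then show ?thesis by (simp add: divide_inverse)
qed

lemma fcv_unique:
  assumes "h 0 = 0" "\<forall>t. (h has_real_derivative (1 / sqrt (1 + 2 * (h t)\<^sup>2))) (at t)"
  shows "h = Finv"
proof -
  have "\<forall>t. ((\<lambda>t. Fi (h t) - t) has_real_derivative 0) (at t)"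
  proof
    fix t
    have p: "0 < 1 + 2 * (h t)\<^sup>2" by (simp add: add_pos_nonneg)
    have "((\<lambda>t. Fi (h t) - t) has_real_derivative
           sqrt (1 + 2 * (h t)\<^sup>2) * (1 / sqrt (1 + 2 * (h t)\<^sup>2)) - 1) (at t)"
      by (rule derivative_eq_intros DERIV_chain2[OF Fi_deriv] assms(2)[rule_format] refl)+
    then show "((\<lambda>t. Fi (h t) - t) has_real_derivative 0) (at t)" using p by simp
  qed
  then have "(\<lambda>t. Fi (h t) - t) t = (\<lambda>t. Fi (h t) - t) 0" for t by (rule DERIV_isconst_all)
  then have "\<And>t. Fi (h t) - t = Fi (h 0) - 0" by simp
  then have e: "\<And>t. Fi (h t) = t" using assms(1) by simp
  show ?thesis
  proof
    fix t show "h t = Finv t" using Finv_Fi[of "h t"] e[of t] by simp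
  qed
qed

lemma fcv_eq: "fcv = Finv"
proof -
  have P: "Finv 0 = 0 \<and> (\<forall>t. (Finv has_real_derivative (1 / sqrt (1 + 2 * (Finv t)\<^sup>2))) (at t))"
    using Finv_deriv by (metis Fi_0 Finv_Fi)
  show ?thesis unfolding fcv_def
    by (rule the_equality) (use P fcv_unique in auto)
qed

lemma fcv_cont: "continuous_on S fcv"
  unfolding fcv_eq by (simp add: Finv_cont continuous_at_imp_continuous_on)

lemma fcv_0[simp]: "fcv 0 = 0" by (metis Fi_0 Finv_Fi fcv_eq)

lemma fcv_odd: "fcv (- t) = - fcv t"
  unfolding fcv_eq by (metis Fi_Finv Fi_odd Finv_Fi)

lemma fcv_Fi: "fcv (Fi s) = s" unfolding fcv_eq by simp

definition psi :: "nat \<Rightarrow> real \<Rightarrow> real" where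
  "psi m z = (if z > 0 then exp (-1/z) / z^m else 0)"

lemma psi_lim0: "(psi m \<longlongrightarrow> 0) (at 0)"
proof -
  have r: "(psi m \<longlongrightarrow> 0) (at_right 0)"
  proof -
    have "((\<lambda>z::real. exp (-1/z) / z^m) \<longlongrightarrow> 0) (at_right 0)" by real_asymp
    moreover have "eventually (\<lambda>z. exp (-1/z) / z^m = psi m z) (at_right (0::real))"
      by (simp add: eventually_at_right_less psi_def eventually_mono[OF eventually_at_right_less])
    ultimately show ?thesis by (rule Lim_transform_eventually)
  qed
  have l: "(psi m \<longlongrightarrow> 0) (at_left 0)"
  proof -
    have "eventually (\<lambda>z. 0 = psi m z) (at_left (0::real))"
      using eventually_at_left_real[of "-1" 0] by (auto elim!: eventually_mono simp: psi_def)
    then show ?thesis by (rule Lim_transform_eventually[OF tendsto_const])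
  qed
  show ?thesis using l r by (simp add: filterlim_split_at)
qed

lemma psi_0[simp]: "psi m 0 = 0" by (simp add: psi_def)

lemma psi_deriv: "(psi m has_real_derivative (psi (m+2) z - real m * psi (m+1) z)) (at z)"
proof (cases "z = 0")
  case True
  have "((\<lambda>y. (psi m y - psi m 0) / (y - 0)) \<longlongrightarrow> 0) (at 0)"
  proof -
    have "eventually (\<lambda>y. psi (m+1) y = (psi m y - psi m 0) / (y - 0)) (at (0::real))"
      by (auto simp: eventually_at_filter psi_def)
    moreover have "(psi (m+1) \<longlongrightarrow> 0) (at 0)" by (rule psi_lim0)
    ultimately show ?thesis by (rule Lim_transform_eventually[rotated])
  qed
  then show ?thesis using True by (simp add: has_field_derivative_iff)
next
  case False
  show ?thesis
  proof (cases "z > 0")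
    case True
    have "((\<lambda>z. exp (-1/z) / z^m) has_real_derivative
        (exp (-1/z) * (1/z^2) * z^m - exp (-1/z) * (real m * z^(m-1))) / (z^m * z^m)) (at z)"
      using True by (auto intro!: derivative_eq_intros simp: power2_eq_square)
    moreover have "(exp (-1/z) * (1/z^2) * z^m - exp (-1/z) * (real m * z^(m-1))) / (z^m * z^m)
        = psi (m+2) z - real m * psi (m+1) z"
    proof (cases m)
      case 0 then show ?thesis using True by (simp add: psi_def power2_eq_square)
    next
      case (Suc k)
      then show ?thesis using True by (simp add: psi_def field_simps power2_eq_square)
    qed
    ultimately have "((\<lambda>z. exp (-1/z) / z^m) has_real_derivative
        psi (m+2) z - real m * psi (m+1) z) (at z)" by simp
    then show ?thesis
      by (rule has_field_derivative_transform_within_open[where S="{0<..}"]) (use True in \<open>auto simp: psi_def\<close>)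
  next
    case False
    with \<open>z \<noteq> 0\<close> have "z < 0" by simp
    have "((\<lambda>z. 0::real) has_real_derivative 0) (at z)" by simp
    then have "((\<lambda>z. 0::real) has_real_derivative psi (m+2) z - real m * psi (m+1) z) (at z)"
      using \<open>z < 0\<close> by (simp add: psi_def)
    then show ?thesis
      by (rule has_field_derivative_transform_within_open[where S="{..<0}"]) (use \<open>z < 0\<close> in \<open>auto simp: psi_def\<close>)
  qed
qed

lemma psi_cont: "isCont (psi m) z"
  by (rule DERIV_isCont[OF psi_deriv])

lemma psi0_bounds: "0 \<le> psi 0 z" "psi 0 z \<le> 1"
  by (auto simp: psi_def)

inductive_set Ccl :: "real poly \<Rightarrow> (real \<Rightarrow> real) set" for q where
  base: "(\<lambda>y. poly r y * psi m (poly q y)) \<in> Ccl q"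
| add: "f \<in> Ccl q \<Longrightarrow> g \<in> Ccl q \<Longrightarrow> (\<lambda>y. f y + g y) \<in> Ccl q"

lemma Ccl_props:
  assumes "f \<in> Ccl q"
  shows "continuous_on UNIV f \<and> (\<exists>f'\<in>Ccl q. \<forall>y. (f has_real_derivative f' y) (at y))"
  using assms
proof induction
  case (base r m)
  have c: "continuous_on UNIV (\<lambda>y. poly r y * psi m (poly q y))"
    by (intro continuous_intros continuous_on_compose2[of UNIV "psi m" UNIV "poly q", simplified])
       (auto intro: continuous_at_imp_continuous_on psi_cont)
  let ?f' = "\<lambda>y. (poly (pderiv r) y * psi m (poly q y) + poly (r * pderiv q) y * psi (m+2) (poly q y))
           + poly (smult (- real m) (r * pderiv q)) y * psi (m+1) (poly q y)"
  have m: "?f' \<in> Ccl q" by (intro Ccl.add Ccl.base)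
  have d: "((\<lambda>y. poly r y * psi m (poly q y)) has_real_derivative ?f' y) (at y)" for y
  proof -
    have "((\<lambda>y. poly r y * psi m (poly q y)) has_real_derivative
         poly (pderiv r) y * psi m (poly q y) +
         ((psi (m+2) (poly q y) - real m * psi (m+1) (poly q y)) * poly (pderiv q) y) * poly r y) (at y)"
      by (intro DERIV_mult poly_DERIV DERIV_chain2[OF psi_deriv])
    then show ?thesis by (simp add: algebra_simps)
  qed
  show ?case using c m d by (intro conjI bexI[of _ ?f']) auto
next
  case (add f g)
  then obtain f' g' where f': "f' \<in> Ccl q" "\<And>y. (f has_real_derivative f' y) (at y)"
     and g': "g' \<in> Ccl q" "\<And>y. (g has_real_derivative g' y) (at y)" by blast
  have "(\<lambda>y. f' y + g' y) \<in> Ccl q" using f' g' by (intro Ccl.add)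
  moreover have "\<And>y. ((\<lambda>y. f y + g y) has_real_derivative f' y + g' y) (at y)"
    using f' g' by (intro DERIV_add) auto
  moreover have "continuous_on UNIV (\<lambda>y. f y + g y)" using add by (intro continuous_intros) auto
  ultimately show ?case by (intro conjI bexI[of _ "\<lambda>y. f' y + g' y"]) auto
qed

definition Scl :: "('a::euclidean_space \<Rightarrow> real poly) \<Rightarrow> ('a \<Rightarrow> real) set" where
  "Scl Q = {\<phi>. \<exists>F. (\<forall>b\<in>Basis. F b \<in> Ccl (Q b)) \<and> \<phi> = (\<lambda>x. \<Prod>b\<in>Basis. F b (x \<bullet> b))}"

lemma Scl_props:
  assumes "\<phi> \<in> Scl Q"
  shows "continuous_on UNIV \<phi> \<and>
    (\<forall>i\<in>Basis. \<exists>dphi\<in>Scl Q. \<forall>x. ((\<lambda>t. \<phi> (x + t *\<^sub>R i)) has_real_derivative dphi x) (at 0))"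
proof -
  obtain F where F: "\<And>b. b \<in> Basis \<Longrightarrow> F b \<in> Ccl (Q b)" and phi: "\<phi> = (\<lambda>x. \<Prod>b\<in>Basis. F b (x \<bullet> b))"
    using assms unfolding Scl_def by blast
  have cF: "continuous_on UNIV (F b)" if "b \<in> Basis" for b using Ccl_props[OF F[OF that]] by blast
  have c: "continuous_on UNIV \<phi>" unfolding phi
    by (intro continuous_on_prod continuous_on_compose2[OF cF] continuous_intros) auto
  have d: "\<exists>dphi\<in>Scl Q. \<forall>x. ((\<lambda>t. \<phi> (x + t *\<^sub>R i)) has_real_derivative dphi x) (at 0)"
    if i: "i \<in> Basis" for i
  proof -
    obtain Fi' where Fi': "Fi' \<in> Ccl (Q i)" "\<And>y. (F i has_real_derivative Fi' y) (at y)"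
      using Ccl_props[OF F[OF i]] by blast
    define G where "G = F(i := Fi')"
    have G: "\<forall>b\<in>Basis. G b \<in> Ccl (Q b)" using F Fi' by (auto simp: G_def)
    define dphi where "dphi = (\<lambda>x. \<Prod>b\<in>Basis. G b (x \<bullet> b))"
    have "dphi \<in> Scl Q" unfolding Scl_def dphi_def using G by blast
    moreover have "((\<lambda>t. \<phi> (x + t *\<^sub>R i)) has_real_derivative dphi x) (at 0)" for x
    proof -
      let ?C = "\<Prod>b\<in>Basis - {i}. F b (x \<bullet> b)"
      have e1: "\<phi> (x + t *\<^sub>R i) = F i (x \<bullet> i + t) * ?C" for t
      proof -
        have "\<phi> (x + t *\<^sub>R i) = (\<Prod>b\<in>Basis. F b ((x + t *\<^sub>R i) \<bullet> b))" by (simp add: phi)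
        also have "\<dots> = F i ((x + t *\<^sub>R i) \<bullet> i) * (\<Prod>b\<in>Basis - {i}. F b ((x + t *\<^sub>R i) \<bullet> b))"
          by (rule prod.remove[OF finite_Basis i])
        also have "(\<Prod>b\<in>Basis - {i}. F b ((x + t *\<^sub>R i) \<bullet> b)) = ?C"
          by (rule prod.cong) (auto simp: inner_add_left inner_Basis i)
        finally show ?thesis using i by (simp add: inner_add_left)
      qed
      have e2: "dphi x = Fi' (x \<bullet> i) * ?C"
      proof -
        have "dphi x = G i (x \<bullet> i) * (\<Prod>b\<in>Basis - {i}. G b (x \<bullet> b))"
          unfolding dphi_def by (rule prod.remove[OF finite_Basis i])
        also have "(\<Prod>b\<in>Basis - {i}. G b (x \<bullet> b)) = ?C"
          by (rule prod.cong) (auto simp: G_def)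
        finally show ?thesis by (simp add: G_def)
      qed
      have "((\<lambda>t. F i (x \<bullet> i + t) * ?C) has_real_derivative (Fi' (x \<bullet> i + 0) * 1) * ?C) (at 0)"
        by (intro DERIV_cmult_right DERIV_chain2[OF Fi'(2)] derivative_eq_intros) auto
      then show ?thesis unfolding e1 e2 by simp
    qed
    ultimately show ?thesis by blast
  qed
  show ?thesis using c d by blast
qed

lemma Scl_smooth: "\<phi> \<in> Scl Q \<Longrightarrow> smooth_fun \<phi>"
  unfolding smooth_fun_def using Scl_props by blast

definition bumpQ :: "'a::euclidean_space \<Rightarrow> 'a \<Rightarrow> nat \<Rightarrow> 'a \<Rightarrow> real poly" where
  "bumpQ \<alpha> \<beta> n b = smult (real n + 1) ([:-(\<alpha> \<bullet> b), 1:] * [:\<beta> \<bullet> b, -1:])"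

lemma poly_bumpQ: "poly (bumpQ \<alpha> \<beta> n b) y = (real n + 1) * ((y - \<alpha> \<bullet> b) * (\<beta> \<bullet> b - y))"
  by (simp add: bumpQ_def algebra_simps)

definition bump :: "'a::euclidean_space \<Rightarrow> 'a \<Rightarrow> nat \<Rightarrow> 'a \<Rightarrow> real" where
  "bump \<alpha> \<beta> n x = (\<Prod>b\<in>Basis. psi 0 (poly (bumpQ \<alpha> \<beta> n b) (x \<bullet> b)))"

lemma bump_Scl: "bump \<alpha> \<beta> n \<in> Scl (bumpQ \<alpha> \<beta> n)"
proof -
  have "(\<lambda>y. poly 1 y * psi 0 (poly (bumpQ \<alpha> \<beta> n b) y)) \<in> Ccl (bumpQ \<alpha> \<beta> n b)" for b
    by (rule Ccl.base)
  then have "(\<lambda>y. psi 0 (poly (bumpQ \<alpha> \<beta> n b) y)) \<in> Ccl (bumpQ \<alpha> \<beta> n b)" for b by simp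
  then show ?thesis unfolding Scl_def bump_def[abs_def]
    by (intro CollectI exI[of _ "\<lambda>b y. psi 0 (poly (bumpQ \<alpha> \<beta> n b) y)"]) auto
qed

lemma bump_zero:
  assumes ab: "\<forall>b\<in>Basis. \<alpha> \<bullet> b < \<beta> \<bullet> b" and "x \<notin> box \<alpha> \<beta>"
  shows "bump \<alpha> \<beta> n x = 0"
proof -
  note \<open>x \<notin> box \<alpha> \<beta>\<close>
  then obtain b where b: "b \<in> Basis" "\<not> (\<alpha> \<bullet> b < x \<bullet> b \<and> x \<bullet> b < \<beta> \<bullet> b)"
    by (auto simp: mem_box)
  have "(x \<bullet> b - \<alpha> \<bullet> b) * (\<beta> \<bullet> b - x \<bullet> b) \<le> 0 \<or> \<alpha> \<bullet> b \<ge> \<beta> \<bullet> b"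
    using b(2) by (auto simp: mult_le_0_iff)
  have "\<not> (0 < (real n + 1) * ((x \<bullet> b - \<alpha> \<bullet> b) * (\<beta> \<bullet> b - x \<bullet> b)))"
  proof
    assume "0 < (real n + 1) * ((x \<bullet> b - \<alpha> \<bullet> b) * (\<beta> \<bullet> b - x \<bullet> b))"
    then have "0 < (x \<bullet> b - \<alpha> \<bullet> b) * (\<beta> \<bullet> b - x \<bullet> b)"
      by (simp add: zero_less_mult_iff) 
    then show False using b ab by (auto simp: zero_less_mult_iff)
  qed
  then have "psi 0 (poly (bumpQ \<alpha> \<beta> n b) (x \<bullet> b)) = 0"
    by (simp add: psi_def poly_bumpQ)
  then show ?thesis unfolding bump_def using b(1) by (intro prod_zero) auto
qed

lemma bump_bounds: "0 \<le> bump \<alpha> \<beta> n x" "bump \<alpha> \<beta> n x \<le> 1"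
  unfolding bump_def by (auto intro!: prod_nonneg prod_le_1 psi0_bounds)

lemma bump_abs_le: "\<forall>b\<in>Basis. \<alpha> \<bullet> b < \<beta> \<bullet> b \<Longrightarrow> \<bar>bump \<alpha> \<beta> n x\<bar> \<le> indicator (box \<alpha> \<beta>) x"
  using bump_zero[of \<alpha> \<beta> x n] bump_bounds[of \<alpha> \<beta> n x] by (auto split: split_indicator)

lemma bump_test:
  assumes ab: "\<forall>b\<in>Basis. \<alpha> \<bullet> b < \<beta> \<bullet> b" shows "test_fun (bump \<alpha> \<beta> n)"
proof -
  have "{x. bump \<alpha> \<beta> n x \<noteq> 0} \<subseteq> cbox \<alpha> \<beta>"
    using bump_zero[OF ab] box_subset_cbox by blast
  then have "closure {x. bump \<alpha> \<beta> n x \<noteq> 0} \<subseteq> cbox \<alpha> \<beta>"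
    using closure_minimal closed_cbox by blast
  then have "compact (closure {x. bump \<alpha> \<beta> n x \<noteq> 0})"
    by (meson bounded_cbox bounded_subset closed_closure compact_eq_bounded_closed)
  then show ?thesis unfolding test_fun_def using Scl_smooth[OF bump_Scl] by blast
qed

lemma bump_lim:
  assumes ab: "\<forall>b\<in>Basis. \<alpha> \<bullet> b < \<beta> \<bullet> b"
  shows "(\<lambda>n. bump \<alpha> \<beta> n x) \<longlonglongrightarrow> indicator (box \<alpha> \<beta>) x"
proof (cases "x \<in> box \<alpha> \<beta>")
  case True
  have L: "(\<lambda>n. psi 0 (poly (bumpQ \<alpha> \<beta> n b) (x \<bullet> b))) \<longlonglongrightarrow> 1" if b: "b \<in> Basis" for b
  proof -
    define u where "u = (x \<bullet> b - \<alpha> \<bullet> b) * (\<beta> \<bullet> b - x \<bullet> b)"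
    have u: "u > 0" using True b by (auto simp: mem_box u_def)
    have e: "psi 0 (poly (bumpQ \<alpha> \<beta> n b) (x \<bullet> b)) = exp ((-1/u) * inverse (real (Suc n)))" for n
    proof -
      have p: "poly (bumpQ \<alpha> \<beta> n b) (x \<bullet> b) = real (Suc n) * u" by (simp add: poly_bumpQ u_def)
      have q: "(-1/u) * inverse (real (Suc n)) = -1 / (real (Suc n) * u)" using u by (simp add: field_simps)
      show ?thesis unfolding p q using u by (simp add: psi_def)
    qed
    have "(\<lambda>n. exp ((-1/u) * inverse (real (Suc n)))) \<longlonglongrightarrow> exp ((-1/u) * 0)"
      by (intro tendsto_intros LIMSEQ_inverse_real_of_nat)
    then show ?thesis unfolding e by simp
  qed
  have "(\<lambda>n. bump \<alpha> \<beta> n x) \<longlonglongrightarrow> (\<Prod>b\<in>Basis. (\<lambda>_. 1::real) (x \<bullet> b))"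
    unfolding bump_def by (rule tendsto_prod) (simp add: L)
  then show ?thesis using True by simp
next
  case False
  then show ?thesis by (simp add: bump_zero[OF ab])
qed

lemma loc_integrable:
  fixes h :: "'a::euclidean_space \<Rightarrow> real"
  assumes hm: "h \<in> borel_measurable lborel" and h2: "integrable lborel (\<lambda>x. (h x)^2)"
  shows "integrable lborel (\<lambda>x. (1 + (h x)^2) * indicator (box \<alpha> \<beta>) x)"
proof -
  have i1: "integrable lborel (indicator (box \<alpha> \<beta>) :: 'a \<Rightarrow> real)"
    using emeasure_lborel_box_finite[of \<alpha> \<beta>] by (simp add: integrable_indicator_iff)
  have i2: "integrable lborel (\<lambda>x. indicator (box \<alpha> \<beta>) x *\<^sub>R (h x)^2)"
    by (rule integrable_mult_indicator) (auto simp: h2)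
  have "integrable lborel (\<lambda>x. indicator (box \<alpha> \<beta>) x + indicator (box \<alpha> \<beta>) x *\<^sub>R (h x)^2)"
    using i1 i2 by (rule Bochner_Integration.integrable_add)
  then show ?thesis by (simp add: algebra_simps)
qed

lemma abs_le_1_sq: "\<bar>t::real\<bar> \<le> 1 + t^2"
proof -
  have a: "0 \<le> (\<bar>t\<bar> - 1)^2" by simp
  have b: "(\<bar>t\<bar> - 1)^2 = \<bar>t\<bar>^2 + 1 - 2 * \<bar>t\<bar>" by (simp add: power2_diff)
  have c: "\<bar>t\<bar>^2 = t^2" by simp
  have d: "0 \<le> t^2" by simp
  from a b c d show ?thesis by linarith
qed

lemma box_integral_zero:
  fixes h :: "'a::euclidean_space \<Rightarrow> real"
  assumes hm: "h \<in> borel_measurable lborel" and h2: "integrable lborel (\<lambda>x. (h x)^2)"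
    and ht: "\<And>\<phi>. test_fun \<phi> \<Longrightarrow> (\<integral>x. h x * \<phi> x \<partial>lborel) = 0"
  shows "(\<integral>x. h x * indicator (box \<alpha> \<beta>) x \<partial>lborel) = 0"
proof (cases "\<forall>b\<in>Basis. \<alpha> \<bullet> b < \<beta> \<bullet> b")
  case False
  then have "box \<alpha> \<beta> = {}" using box_ne_empty(2) by blast
  then show ?thesis by simp
next
  case True
  define w where "w x = (1 + (h x)^2) * indicator (box \<alpha> \<beta>) x" for x
  have wi: "integrable lborel w" unfolding w_def by (rule loc_integrable[OF hm h2])
  have bm: "bump \<alpha> \<beta> n \<in> borel_measurable lborel" for n
    using Scl_props[OF bump_Scl] by (auto intro: borel_measurable_continuous_onI)
  have "(\<lambda>n. \<integral>x. h x * bump \<alpha> \<beta> n x \<partial>lborel) \<longlonglongrightarrow> (\<integral>x. h x * indicator (box \<alpha> \<beta>) x \<partial>lborel)"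
  proof (rule integral_dominated_convergence[where w=w])
    show "(\<lambda>x. h x * indicator (box \<alpha> \<beta>) x) \<in> borel_measurable lborel" using hm by measurable
    show "(\<lambda>x. h x * bump \<alpha> \<beta> n x) \<in> borel_measurable lborel" for n using hm bm[of n] by measurable
    show "integrable lborel w" by (rule wi)
    show "AE x in lborel. (\<lambda>n. h x * bump \<alpha> \<beta> n x) \<longlonglongrightarrow> h x * indicator (box \<alpha> \<beta>) x"
      by (intro AE_I2 tendsto_mult tendsto_const bump_lim True)
    show "AE x in lborel. norm (h x * bump \<alpha> \<beta> n x) \<le> w x" for n
    proof (intro AE_I2)
      fix x
      have "\<bar>h x * bump \<alpha> \<beta> n x\<bar> = \<bar>h x\<bar> * \<bar>bump \<alpha> \<beta> n x\<bar>" by (simp add: abs_mult)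
      also have "\<dots> \<le> (1 + (h x)^2) * indicator (box \<alpha> \<beta>) x"
        by (intro mult_mono abs_le_1_sq bump_abs_le True) auto
      finally show "norm (h x * bump \<alpha> \<beta> n x) \<le> w x" by (simp add: w_def)
    qed
  qed
  moreover have "(\<lambda>n. \<integral>x. h x * bump \<alpha> \<beta> n x \<partial>lborel) = (\<lambda>n. 0)"
    by (rule ext, rule ht[OF bump_test[OF True]])
  ultimately have "(\<lambda>n. 0::real) \<longlonglongrightarrow> (\<integral>x. h x * indicator (box \<alpha> \<beta>) x \<partial>lborel)" by simp
  then show ?thesis using LIMSEQ_unique[OF _ tendsto_const] by metis
qed

lemma fundamental_lemma:
  fixes h :: "'a::euclidean_space \<Rightarrow> real"
  assumes hm: "h \<in> borel_measurable lborel" and h2: "integrable lborel (\<lambda>x. (h x)^2)"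
    and ht: "\<And>\<phi>. test_fun \<phi> \<Longrightarrow> (\<integral>x. h x * \<phi> x \<partial>lborel) = 0"
  shows "AE x in lborel. h x = 0"
proof -
  define P where "P x = ennreal (max 0 (h x))" for x
  define N where "N x = ennreal (max 0 (- h x))" for x
  have Pm[measurable]: "P \<in> borel_measurable lborel" unfolding P_def[abs_def] using hm by measurable
  have Nm[measurable]: "N \<in> borel_measurable lborel" unfolding N_def[abs_def] using hm by measurable
  have loc: "integrable lborel (\<lambda>x. h x * indicator (box a b) x)" for a b
    by (rule Bochner_Integration.integrable_bound[OF loc_integrable[OF hm h2, of a b]])
       (use hm in \<open>auto intro!: AE_I2 mult_mono abs_le_1_sq simp: abs_mult split: split_indicator\<close>)
  have Pi: "integrable lborel (\<lambda>x. max 0 (h x) * indicator (box a b) x)" for a b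
    by (rule Bochner_Integration.integrable_bound[OF loc[of a b]]) (use hm in \<open>auto split: split_indicator\<close>)
  have Ni: "integrable lborel (\<lambda>x. max 0 (- h x) * indicator (box a b) x)" for a b
    by (rule Bochner_Integration.integrable_bound[OF loc[of a b]]) (use hm in \<open>auto split: split_indicator\<close>)
  have eP: "emeasure (density lborel P) (box a b) = ennreal (\<integral>x. max 0 (h x) * indicator (box a b) x \<partial>lborel)" for a b
  proof -
    have "emeasure (density lborel P) (box a b) = (\<integral>\<^sup>+x. P x * indicator (box a b) x \<partial>lborel)"
      by (rule emeasure_density) auto
    also have "\<dots> = (\<integral>\<^sup>+x. ennreal (max 0 (h x) * indicator (box a b) x) \<partial>lborel)"
      by (intro nn_integral_cong) (auto simp: P_def split: split_indicator)
    also have "\<dots> = ennreal (\<integral>x. max 0 (h x) * indicator (box a b) x \<partial>lborel)"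
      by (rule nn_integral_eq_integral[OF Pi]) auto
    finally show ?thesis .
  qed
  have eN: "emeasure (density lborel N) (box a b) = ennreal (\<integral>x. max 0 (- h x) * indicator (box a b) x \<partial>lborel)" for a b
  proof -
    have "emeasure (density lborel N) (box a b) = (\<integral>\<^sup>+x. N x * indicator (box a b) x \<partial>lborel)"
      by (rule emeasure_density) auto
    also have "\<dots> = (\<integral>\<^sup>+x. ennreal (max 0 (- h x) * indicator (box a b) x) \<partial>lborel)"
      by (intro nn_integral_cong) (auto simp: N_def split: split_indicator)
    also have "\<dots> = ennreal (\<integral>x. max 0 (- h x) * indicator (box a b) x \<partial>lborel)"
      by (rule nn_integral_eq_integral[OF Ni]) auto
    finally show ?thesis .
  qed
  have eqPN: "(\<integral>x. max 0 (h x) * indicator (box a b) x \<partial>lborel) = (\<integral>x. max 0 (- h x) * indicator (box a b) x \<partial>lborel)" for a b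
  proof -
    have "(\<integral>x. max 0 (h x) * indicator (box a b) x \<partial>lborel) - (\<integral>x. max 0 (- h x) * indicator (box a b) x \<partial>lborel)
        = (\<integral>x. max 0 (h x) * indicator (box a b) x - max 0 (- h x) * indicator (box a b) x \<partial>lborel)"
      by (rule Bochner_Integration.integral_diff[OF Pi Ni, symmetric])
    also have "\<dots> = (\<integral>x. h x * indicator (box a b) x \<partial>lborel)"
      by (intro Bochner_Integration.integral_cong) (auto simp: max_def split: split_indicator)
    also have "\<dots> = 0" by (rule box_integral_zero[OF hm h2 ht])
    finally show ?thesis by simp
  qed
  have dens: "density lborel P = density lborel N"
  proof (rule measure_eqI_generator_eq[where E="range (\<lambda>(a, b). box a b)" and \<Omega>=UNIV
        and A="\<lambda>n::nat. box (- (real n *\<^sub>R One)) (real n *\<^sub>R One)"])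
    show "Int_stable (range (\<lambda>(a, b). box a b :: 'a set))"
      by (auto simp: Int_stable_def box_Int_box)
    show "range (\<lambda>(a, b). box a b :: 'a set) \<subseteq> Pow UNIV" by simp
    show "sets (density lborel P) = sigma_sets UNIV (range (\<lambda>(a, b). box a b))"
      by (simp add: borel_eq_box)
    show "sets (density lborel N) = sigma_sets UNIV (range (\<lambda>(a, b). box a b))"
      by (simp add: borel_eq_box)
    show "range (\<lambda>n::nat. box (- (real n *\<^sub>R One)) (real n *\<^sub>R One)) \<subseteq> range (\<lambda>(a, b). box a b :: 'a set)"
      by auto
    show "(\<Union>n::nat. box (- (real n *\<^sub>R One)) (real n *\<^sub>R One)) = (UNIV :: 'a set)"
      unfolding UN_box_eq_UNIV by auto
    show "emeasure (density lborel P) (box (- (real n *\<^sub>R One)) (real n *\<^sub>R One)) \<noteq> \<infinity>" for n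
      by (simp add: eP)
    show "emeasure (density lborel P) X = emeasure (density lborel N) X"
      if "X \<in> range (\<lambda>(a, b). box a b)" for X
      using that eP eN eqPN by auto
  qed
  have "AE x in lborel. P x = N x"
    by (rule sigma_finite_measure.density_unique[OF sigma_finite_lborel Pm Nm dens])
  then show ?thesis
    by (rule AE_mp) (auto intro!: AE_I2 simp: P_def N_def max_def split: if_splits)
qed

lemma cs_integrable:
  fixes f :: "'a::euclidean_space \<Rightarrow> real"
  assumes "continuous_on UNIV f" "\<And>x. R \<le> norm x \<Longrightarrow> f x = 0"
  shows "integrable lborel f"
proof -
  have "integrable lborel (\<lambda>x. indicator (cball 0 R) x *\<^sub>R f x)"
    by (rule borel_integrable_compact) (auto intro: continuous_on_subset[OF assms(1)])
  moreover have "(\<lambda>x. indicator (cball 0 R) x *\<^sub>R f x) = f"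
    using assms(2) by (auto simp: fun_eq_iff split: split_indicator)
  ultimately show ?thesis by simp
qed

lemma cs_bounded:
  fixes f :: "'a::euclidean_space \<Rightarrow> real"
  assumes "continuous_on UNIV f" "\<And>x. R \<le> norm x \<Longrightarrow> f x = 0"
  shows "\<exists>M. \<forall>x. \<bar>f x\<bar> \<le> M"
proof -
  have "compact (f ` cball 0 R)"
    by (rule compact_continuous_image) (auto intro: continuous_on_subset[OF assms(1)])
  then obtain M where M: "\<forall>y\<in>f ` cball 0 R. norm y \<le> M"
    using compact_imp_bounded bounded_iff by metis
  have "\<bar>f x\<bar> \<le> max M 0" for x
  proof (cases "norm x \<le> R")
    case True
    then have "f x \<in> f ` cball 0 R" by simp
    then have "norm (f x) \<le> M" using M by blast
    then show ?thesis by simp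
  next
    case False then show ?thesis using assms(2) by simp
  qed
  then show ?thesis by blast
qed

lemma integral_translate:
  fixes F :: "'a::euclidean_space \<Rightarrow> real"
  assumes "F \<in> borel_measurable borel"
  shows "(\<integral>x. F (c + x) \<partial>lborel) = (\<integral>x. F x \<partial>lborel)"
proof -
  have "(\<integral>x. F x \<partial>lborel) = (\<integral>x. F x \<partial>distr lborel borel ((+) c))"
    by (simp add: lborel_distr_plus)
  also have "\<dots> = (\<integral>x. F (c + x) \<partial>lborel)"
    by (rule integral_distr) (use assms in auto)
  finally show ?thesis by simp
qed

lemma deriv_integral_zero:
  fixes F D :: "'a::euclidean_space \<Rightarrow> real" and i :: 'a
  assumes cF: "continuous_on UNIV F" and cD: "continuous_on UNIV D"
    and dF: "\<And>x. ((\<lambda>t. F (x + t *\<^sub>R i)) has_real_derivative D x) (at 0)"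
    and ni: "norm i \<le> 1"
    and supp: "\<And>x. R \<le> norm x \<Longrightarrow> F x = 0 \<and> D x = 0"
  shows "(\<integral>x. D x \<partial>lborel) = 0"
proof -
  obtain M where M: "\<And>x. \<bar>D x\<bar> \<le> M" using cs_bounded[OF cD, of R] supp by blast
  define Q where "Q n x = (F (x + (inverse (real (Suc n))) *\<^sub>R i) - F x) * real (Suc n)" for n x
  have Fm: "F \<in> borel_measurable borel" using cF by (rule borel_measurable_continuous_onI)
  have Fi: "integrable lborel F" by (rule cs_integrable[OF cF]) (use supp in auto)
  have Fi2: "integrable lborel (\<lambda>x. F (x + c))" for c
  proof (rule cs_integrable[where R="R + norm c"])
    show "continuous_on UNIV (\<lambda>x. F (x + c))"
      by (intro continuous_on_compose2[OF cF] continuous_intros) auto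
    show "F (x + c) = 0" if "R + norm c \<le> norm x" for x
    proof -
      have "norm x \<le> norm (x + c) + norm c" by (metis add_diff_cancel norm_triangle_ineq4)
      then show ?thesis using supp that by auto
    qed
  qed
  have Q0: "(\<integral>x. Q n x \<partial>lborel) = 0" for n
  proof -
    let ?c = "(inverse (real (Suc n))) *\<^sub>R i"
    have "(\<integral>x. Q n x \<partial>lborel) = ((\<integral>x. F (x + ?c) \<partial>lborel) - (\<integral>x. F x \<partial>lborel)) * real (Suc n)"
      unfolding Q_def using Fi Fi2 by simp
    also have "(\<integral>x. F (x + ?c) \<partial>lborel) = (\<integral>x. F x \<partial>lborel)"
      using integral_translate[OF Fm, of ?c] by (simp add: add.commute)
    finally show ?thesis by simp
  qed
  have "(\<lambda>n. \<integral>x. Q n x \<partial>lborel) \<longlonglongrightarrow> (\<integral>x. D x \<partial>lborel)"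
  proof (rule integral_dominated_convergence[where w="\<lambda>x::'a. M * indicator (cball 0 (R + 1)) x"])
    show "D \<in> borel_measurable lborel" using cD by (simp add: borel_measurable_continuous_onI)
    show "Q n \<in> borel_measurable lborel" for n unfolding Q_def using Fm by measurable
    have "integrable lborel (indicator (cball 0 (R + 1)) :: 'a \<Rightarrow> real)"
      using emeasure_bounded_finite[OF bounded_cball[of "0::'a" "R+1"]] by (simp add: integrable_indicator_iff)
    then show "integrable lborel (\<lambda>x::'a. M * indicator (cball 0 (R + 1)) x)"
      by simp
    show "AE x in lborel. (\<lambda>n. Q n x) \<longlonglongrightarrow> D x"
    proof (rule AE_I2)
      fix x
      have "((\<lambda>t. (F (x + t *\<^sub>R i) - F (x + 0 *\<^sub>R i)) / (t - 0)) \<longlongrightarrow> D x) (at 0)"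
        using dF[of x] by (simp add: has_field_derivative_iff)
      moreover have "filterlim (\<lambda>n. inverse (real (Suc n))) (at 0) sequentially"
        unfolding filterlim_at using LIMSEQ_inverse_real_of_nat by auto
      ultimately have "(\<lambda>n. (F (x + (inverse (real (Suc n))) *\<^sub>R i) - F (x + 0 *\<^sub>R i)) / (inverse (real (Suc n)) - 0)) \<longlonglongrightarrow> D x"
        by (rule filterlim_compose)
      then show "(\<lambda>n. Q n x) \<longlonglongrightarrow> D x" by (simp add: Q_def divide_inverse)
    qed
    show "AE x in lborel. norm (Q n x) \<le> M * indicator (cball (0::'a) (R + 1)) x" for n
    proof (rule AE_I2)
      fix x
      let ?h = "inverse (real (Suc n))"
      have h: "0 < ?h" "?h \<le> 1" by (auto simp: field_simps)
      show "norm (Q n x) \<le> M * indicator (cball 0 (R + 1)) x"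
      proof (cases "norm x \<le> R + 1")
        case True
        have der: "((\<lambda>t. F (x + t *\<^sub>R i)) has_real_derivative D (x + t *\<^sub>R i)) (at t)" for t
        proof -
          have "((\<lambda>s. F ((x + t *\<^sub>R i) + s *\<^sub>R i)) has_real_derivative D (x + t *\<^sub>R i)) (at 0)"
            by (rule dF)
          then have "((\<lambda>s. F (x + (s + t) *\<^sub>R i)) has_real_derivative D (x + t *\<^sub>R i)) (at 0)"
            by (simp add: algebra_simps scaleR_add_left)
          then show ?thesis using DERIV_shift[of "\<lambda>t. F (x + t *\<^sub>R i)" "D (x + t *\<^sub>R i)" 0 t] by simp
        qed
        obtain z where z: "0 < z" "z < ?h"
          "F (x + ?h *\<^sub>R i) - F (x + 0 *\<^sub>R i) = (?h - 0) * D (x + z *\<^sub>R i)"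
          using MVT2[OF h(1), of "\<lambda>t. F (x + t *\<^sub>R i)" "\<lambda>t. D (x + t *\<^sub>R i)"] der by blast
        have "Q n x = D (x + z *\<^sub>R i)" using z(3) by (simp add: Q_def)
        then show ?thesis using M True by simp
      next
        case False
        have "norm x \<le> norm (x + ?h *\<^sub>R i) + ?h * norm i"
          by (metis abs_of_pos add_diff_cancel_right' h(1) norm_scaleR norm_triangle_ineq4)
        moreover have "?h * norm i \<le> 1" using h ni by (simp add: mult_le_one)
        ultimately have "R \<le> norm (x + ?h *\<^sub>R i)" using False by linarith
        then have "Q n x = 0" using supp False by (simp add: Q_def)
        then show ?thesis using False by simp
      qed
    qed
  qed
  then show ?thesis unfolding Q0 using LIMSEQ_unique[OF _ tendsto_const] by metis
qed

lemma test_fun_props: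
  assumes "test_fun \<phi>"
  shows "continuous_on UNIV \<phi>" and "\<exists>R. \<forall>x. R \<le> norm x \<longrightarrow> \<phi> x = 0"
    and "\<And>i dphi. i \<in> Basis \<Longrightarrow> (\<forall>x. ((\<lambda>t. \<phi> (x + t *\<^sub>R i)) has_real_derivative dphi x) (at 0))
          \<Longrightarrow> continuous_on UNIV dphi"
proof -
  from assms obtain S where S0: "\<phi> \<in> S" and S1: "\<forall>\<psi>\<in>S. continuous_on UNIV \<psi> \<and>
        (\<forall>i\<in>Basis. \<exists>dphi\<in>S. \<forall>x. ((\<lambda>t. \<psi> (x + t *\<^sub>R i)) has_real_derivative dphi x) (at 0))"
    unfolding test_fun_def smooth_fun_def by blast
  have S: "\<phi> \<in> S" "\<And>\<psi>. \<psi> \<in> S \<Longrightarrow> continuous_on UNIV \<psi>"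
    "\<And>\<psi> i. \<psi> \<in> S \<Longrightarrow> i \<in> Basis \<Longrightarrow> \<exists>dphi\<in>S. \<forall>x. ((\<lambda>t. \<psi> (x + t *\<^sub>R i)) has_real_derivative dphi x) (at 0)"
    by (rule S0, erule conjunct1[OF S1[rule_format]], erule bspec[OF conjunct2[OF S1[rule_format]]])
  show "continuous_on UNIV \<phi>" using S by blast
  have "bounded (closure {x. \<phi> x \<noteq> 0})" using assms unfolding test_fun_def by (simp add: compact_imp_bounded)
  then obtain B where B: "\<And>x. x \<in> closure {x. \<phi> x \<noteq> 0} \<Longrightarrow> norm x \<le> B" by (auto simp: bounded_iff)
  have "\<forall>x. B + 1 \<le> norm x \<longrightarrow> \<phi> x = 0"
  proof (intro allI impI, rule ccontr)
    fix x assume "B + 1 \<le> norm x" "\<phi> x \<noteq> 0"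
    then have "x \<in> closure {x. \<phi> x \<noteq> 0}" by (intro subsetD[OF closure_subset]) simp
    then show False using B[of x] \<open>B + 1 \<le> norm x\<close> by linarith
  qed
  then show "\<exists>R. \<forall>x. R \<le> norm x \<longrightarrow> \<phi> x = 0" by blast
  fix i dphi assume i: "i \<in> Basis" and d: "\<forall>x. ((\<lambda>t. \<phi> (x + t *\<^sub>R i)) has_real_derivative dphi x) (at 0)"
  obtain d' where d': "d' \<in> S" "\<forall>x. ((\<lambda>t. \<phi> (x + t *\<^sub>R i)) has_real_derivative d' x) (at 0)"
    using S(3)[OF S(1) i] by blast
  have "dphi = d'" using d d'(2) DERIV_unique by blast
  then show "continuous_on UNIV dphi" using S(2) d'(1) by simp
qed

lemma ball_integrable_sq:
  fixes f :: "'a::euclidean_space \<Rightarrow> real"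
  assumes fm: "f \<in> borel_measurable lborel" and f2: "integrable lborel (\<lambda>x. (f x)^2)"
  shows "integrable lborel (\<lambda>x. (1 + (f x)^2) * indicator (cball 0 R) x)"
proof -
  have i1: "integrable lborel (indicator (cball 0 R) :: 'a \<Rightarrow> real)"
    using emeasure_bounded_finite[OF bounded_cball[of "0::'a" R]] by (simp add: integrable_indicator_iff)
  have i2: "integrable lborel (\<lambda>x. indicator (cball (0::'a) R) x *\<^sub>R (f x)^2)"
    by (rule integrable_mult_indicator) (auto simp: f2)
  have "integrable lborel (\<lambda>x. indicator (cball (0::'a) R) x + indicator (cball 0 R) x *\<^sub>R (f x)^2)"
    using i1 i2 by (rule Bochner_Integration.integrable_add)
  then show ?thesis by (simp add: algebra_simps)
qed

lemma integrable_L2_cs: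
  fixes f \<phi> :: "'a::euclidean_space \<Rightarrow> real"
  assumes fm: "f \<in> borel_measurable lborel" and f2: "integrable lborel (\<lambda>x. (f x)^2)"
    and c: "continuous_on UNIV \<phi>" and s: "\<And>x. R \<le> norm x \<Longrightarrow> \<phi> x = 0"
  shows "integrable lborel (\<lambda>x. f x * \<phi> x)"
proof -
  obtain C where C: "\<And>x. \<bar>\<phi> x\<bar> \<le> C" using cs_bounded[OF c s] by blast
  have "integrable lborel (\<lambda>x. C * ((1 + (f x)^2) * indicator (cball 0 R) x))"
    using ball_integrable_sq[OF fm f2, of R] by simp
  then show ?thesis
  proof (rule Bochner_Integration.integrable_bound)
    show "(\<lambda>x. f x * \<phi> x) \<in> borel_measurable lborel"
      using fm borel_measurable_continuous_onI[OF c] by measurable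
    show "AE x in lborel. norm (f x * \<phi> x) \<le> norm (C * ((1 + (f x)^2) * indicator (cball 0 R) x))"
    proof (rule AE_I2)
      fix x
      have C0: "0 \<le> C" using C[of x] by simp
      show "norm (f x * \<phi> x) \<le> norm (C * ((1 + (f x)^2) * indicator (cball 0 R) x))"
      proof (cases "x \<in> cball 0 R")
        case True
        have "\<bar>f x * \<phi> x\<bar> \<le> (1 + (f x)^2) * C"
          unfolding abs_mult by (intro mult_mono abs_le_1_sq C) auto
        then show ?thesis using True C0 by (simp add: abs_mult mult_ac)
      next
        case False then show ?thesis using s[of x] by simp
      qed
    qed
  qed
qed

lemma weak_grad_unique:
  assumes w1: "is_weak_grad v w1" and w2: "is_weak_grad v w2"
  shows "AE x in lborel. w1 x = w2 x"
proof -
  have m1[measurable]: "w1 \<in> borel_measurable lborel" and m2[measurable]: "w2 \<in> borel_measurable lborel"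
    and i1: "integrable lborel (\<lambda>x. (norm (w1 x))\<^sup>2)" and i2: "integrable lborel (\<lambda>x. (norm (w2 x))\<^sup>2)"
    using w1 w2 unfolding is_weak_grad_def by auto
  have comp: "AE x in lborel. (w1 x - w2 x) \<bullet> i = 0" if i: "i \<in> Basis" for i
  proof (rule fundamental_lemma)
    show hm: "(\<lambda>x. (w1 x - w2 x) \<bullet> i) \<in> borel_measurable lborel" by measurable
    have sq: "((w1 x - w2 x) \<bullet> i)^2 \<le> 2 * (norm (w1 x))\<^sup>2 + 2 * (norm (w2 x))\<^sup>2" for x
    proof -
      have "\<bar>(w1 x - w2 x) \<bullet> i\<bar> \<le> norm (w1 x - w2 x)" using i by (simp add: Basis_le_norm)
      also have "\<dots> \<le> norm (w1 x) + norm (w2 x)" by (rule norm_triangle_ineq4)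
      finally have a: "\<bar>(w1 x - w2 x) \<bullet> i\<bar> \<le> norm (w1 x) + norm (w2 x)" .
      have "((w1 x - w2 x) \<bullet> i)^2 \<le> (norm (w1 x) + norm (w2 x))^2"
        using a by (metis abs_ge_zero order_trans power2_abs power_mono)
      also have "\<dots> \<le> 2 * (norm (w1 x))\<^sup>2 + 2 * (norm (w2 x))\<^sup>2"
        using sum_squares_bound[of "norm (w1 x)" "norm (w2 x)"] by (simp add: power2_sum)
      finally show ?thesis .
    qed
    show "integrable lborel (\<lambda>x. ((w1 x - w2 x) \<bullet> i)^2)"
      by (rule Bochner_Integration.integrable_bound[where f="\<lambda>x. 2 * (norm (w1 x))\<^sup>2 + 2 * (norm (w2 x))\<^sup>2"])
         (use i1 i2 sq in \<open>auto intro!: AE_I2\<close>)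
    fix \<phi> :: "'a \<Rightarrow> real" assume t: "test_fun \<phi>"
    from t obtain S where S0: "\<phi> \<in> S" and S1: "\<forall>\<psi>\<in>S. continuous_on UNIV \<psi> \<and>
        (\<forall>i\<in>Basis. \<exists>dphi\<in>S. \<forall>x. ((\<lambda>t. \<psi> (x + t *\<^sub>R i)) has_real_derivative dphi x) (at 0))"
      unfolding test_fun_def smooth_fun_def by blast
    have S: "\<phi> \<in> S" "\<And>\<psi> i. \<psi> \<in> S \<Longrightarrow> i \<in> Basis \<Longrightarrow> \<exists>dphi\<in>S. \<forall>x. ((\<lambda>t. \<psi> (x + t *\<^sub>R i)) has_real_derivative dphi x) (at 0)"
      by (rule S0, erule bspec[OF conjunct2[OF S1[rule_format]]])
    obtain dphi where d: "\<forall>x. ((\<lambda>t. \<phi> (x + t *\<^sub>R i)) has_real_derivative dphi x) (at 0)"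
      using S(2)[OF S(1) i] by blast
    have e1: "(\<integral>x. v x * dphi x \<partial>lborel) = - (\<integral>x. (w1 x \<bullet> i) * \<phi> x \<partial>lborel)"
      using w1 t i d unfolding is_weak_grad_def by blast
    have e2: "(\<integral>x. v x * dphi x \<partial>lborel) = - (\<integral>x. (w2 x \<bullet> i) * \<phi> x \<partial>lborel)"
      using w2 t i d unfolding is_weak_grad_def by blast
    obtain R where R: "\<forall>x. R \<le> norm x \<longrightarrow> \<phi> x = 0" using test_fun_props(2)[OF t] by blast
    have sqi: "integrable lborel (\<lambda>x. (w x \<bullet> i)^2)" if wm: "w \<in> borel_measurable lborel"
        and wi: "integrable lborel (\<lambda>x. (norm (w x))\<^sup>2)" for w :: "'a \<Rightarrow> 'a"
    proof (rule Bochner_Integration.integrable_bound[OF wi])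
      show "(\<lambda>x. (w x \<bullet> i)\<^sup>2) \<in> borel_measurable lborel" using wm by measurable
      show "AE x in lborel. norm ((w x \<bullet> i)\<^sup>2) \<le> norm ((norm (w x))\<^sup>2)"
      proof (rule AE_I2)
        fix x
        have "\<bar>w x \<bullet> i\<bar> \<le> norm (w x)" by (rule Basis_le_norm[OF i])
        then have "\<bar>w x \<bullet> i\<bar>^2 \<le> (norm (w x))^2" by (rule power_mono) simp
        then show "norm ((w x \<bullet> i)\<^sup>2) \<le> norm ((norm (w x))\<^sup>2)" by simp
      qed
    qed
    have I1: "integrable lborel (\<lambda>x. (w1 x \<bullet> i) * \<phi> x)"
      by (rule integrable_L2_cs[OF _ sqi[OF m1 i1] test_fun_props(1)[OF t]]) (use R in auto)
    have I2: "integrable lborel (\<lambda>x. (w2 x \<bullet> i) * \<phi> x)"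
      by (rule integrable_L2_cs[OF _ sqi[OF m2 i2] test_fun_props(1)[OF t]]) (use R in auto)
    have "(\<integral>x. (w1 x - w2 x) \<bullet> i * \<phi> x \<partial>lborel) = (\<integral>x. (w1 x \<bullet> i) * \<phi> x - (w2 x \<bullet> i) * \<phi> x \<partial>lborel)"
      by (simp add: inner_diff_left left_diff_distrib)
    also have "\<dots> = (\<integral>x. (w1 x \<bullet> i) * \<phi> x \<partial>lborel) - (\<integral>x. (w2 x \<bullet> i) * \<phi> x \<partial>lborel)"
      by (rule Bochner_Integration.integral_diff[OF I1 I2])
    also have "\<dots> = 0" using e1 e2 by simp
    finally show "(\<integral>x. (w1 x - w2 x) \<bullet> i * \<phi> x \<partial>lborel) = 0" .
  qed
  have "AE x in lborel. \<forall>i\<in>Basis. (w1 x - w2 x) \<bullet> i = 0"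
    by (rule AE_finite_allI[OF finite_Basis comp])
  then show ?thesis
    by (rule AE_mp) (auto intro!: AE_I2 simp: euclidean_all_zero_iff)
qed

lemma grad_sq_eq:
  assumes "is_weak_grad v w"
  shows "grad_sq v = (\<integral>x. (norm (w x))\<^sup>2 \<partial>lborel)"
proof -
  have "is_weak_grad v (wgrad v)" unfolding wgrad_def by (rule someI[where P="is_weak_grad v", OF assms])
  then have ae: "AE x in lborel. wgrad v x = w x" using assms by (rule weak_grad_unique)
  have m1: "wgrad v \<in> borel_measurable lborel" and m2: "w \<in> borel_measurable lborel"
    using \<open>is_weak_grad v (wgrad v)\<close> assms by (auto simp: is_weak_grad_def)
  show ?thesis unfolding grad_sq_def
  proof (rule integral_cong_AE)
    show "(\<lambda>x. (norm (wgrad v x))\<^sup>2) \<in> borel_measurable lborel" using m1 by measurable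
    show "(\<lambda>x. (norm (w x))\<^sup>2) \<in> borel_measurable lborel" using m2 by measurable
    show "AE x in lborel. (norm (wgrad v x))\<^sup>2 = (norm (w x))\<^sup>2"
      using ae by (rule AE_mp) (auto intro!: AE_I2)
  qed
qed

lemma line_deriv:
  fixes v :: "'a::euclidean_space \<Rightarrow> real"
  assumes "(v has_derivative (\<lambda>h. w \<bullet> h)) (at x)"
  shows "((\<lambda>t. v (x + t *\<^sub>R i)) has_real_derivative (w \<bullet> i)) (at 0)"
proof -
  have l: "((\<lambda>t::real. x + t *\<^sub>R i) has_derivative (\<lambda>t. t *\<^sub>R i)) (at 0)"
    by (auto intro!: derivative_eq_intros)
  have v': "(v has_derivative (\<lambda>h. w \<bullet> h)) (at (x + 0 *\<^sub>R i))" using assms by simp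
  have "((\<lambda>t. v (x + t *\<^sub>R i)) has_derivative (\<lambda>t. w \<bullet> (t *\<^sub>R i))) (at 0)"
    using has_derivative_compose[OF l v'] by (simp add: o_def)
  moreover have "(\<lambda>t. w \<bullet> (t *\<^sub>R i)) = (*) (w \<bullet> i)" by (auto simp: fun_eq_iff)
  ultimately show ?thesis by (simp add: has_field_derivative_def)
qed

lemma C1_weak_grad:
  fixes v :: "'a::euclidean_space \<Rightarrow> real" and w :: "'a \<Rightarrow> 'a"
  assumes dv: "\<And>x. (v has_derivative (\<lambda>h. w x \<bullet> h)) (at x)"
    and cw: "continuous_on UNIV w"
    and sv: "\<And>x. R \<le> norm x \<Longrightarrow> v x = 0 \<and> w x = 0"
  shows "is_weak_grad v w"
proof -
  have cv: "continuous_on UNIV v"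
    by (intro continuous_at_imp_continuous_on ballI has_derivative_continuous[OF dv])
  have wm: "w \<in> borel_measurable lborel" using cw by (simp add: borel_measurable_continuous_onI)
  have wi: "integrable lborel (\<lambda>x. (norm (w x))\<^sup>2)"
    by (rule cs_integrable[where R=R]) (use cw sv in \<open>auto intro!: continuous_intros\<close>)
  have main: "(\<integral>x. v x * dphi x \<partial>lborel) = - (\<integral>x. (w x \<bullet> i) * \<phi> x \<partial>lborel)"
    if t: "test_fun \<phi>" and i: "i \<in> Basis"
      and d: "\<forall>x. ((\<lambda>t. \<phi> (x + t *\<^sub>R i)) has_real_derivative dphi x) (at 0)" for \<phi> dphi i
  proof -
    have c\<phi>: "continuous_on UNIV \<phi>" by (rule test_fun_props(1)[OF t])
    have cd: "continuous_on UNIV dphi" by (rule test_fun_props(3)[OF t i d])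
    let ?D = "\<lambda>x. (w x \<bullet> i) * \<phi> x + v x * dphi x"
    have "(\<integral>x. ?D x \<partial>lborel) = 0"
    proof (rule deriv_integral_zero[where F="\<lambda>x. v x * \<phi> x" and i=i and R=R])
      show "continuous_on UNIV (\<lambda>x. v x * \<phi> x)" using cv c\<phi> by (intro continuous_intros)
      show "continuous_on UNIV ?D" using cv c\<phi> cd cw by (intro continuous_intros) auto
      show "norm i \<le> 1" using i by simp
      show "R \<le> norm x \<Longrightarrow> v x * \<phi> x = 0 \<and> ?D x = 0" for x using sv[of x] by simp
      show "((\<lambda>t. v (x + t *\<^sub>R i) * \<phi> (x + t *\<^sub>R i)) has_real_derivative ?D x) (at 0)" for x
      proof -
        have "((\<lambda>t. v (x + t *\<^sub>R i) * \<phi> (x + t *\<^sub>R i)) has_real_derivative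
              (w x \<bullet> i) * \<phi> (x + 0 *\<^sub>R i) + dphi x * v (x + 0 *\<^sub>R i)) (at 0)"
          by (rule DERIV_mult[OF line_deriv[OF dv] d[rule_format]])
        then show ?thesis by (simp add: mult.commute)
      qed
    qed
    moreover have "(\<integral>x. ?D x \<partial>lborel) = (\<integral>x. (w x \<bullet> i) * \<phi> x \<partial>lborel) + (\<integral>x. v x * dphi x \<partial>lborel)"
    proof (rule Bochner_Integration.integral_add)
      show "integrable lborel (\<lambda>x. (w x \<bullet> i) * \<phi> x)"
        by (rule cs_integrable[where R=R]) (use cw c\<phi> sv in \<open>auto intro!: continuous_intros\<close>)
      show "integrable lborel (\<lambda>x. v x * dphi x)"
        by (rule cs_integrable[where R=R]) (use cv cd sv in \<open>auto intro!: continuous_intros\<close>)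
    qed
    ultimately show ?thesis by simp
  qed
  show ?thesis unfolding is_weak_grad_def using wm wi main by blast
qed

lemma C1_H1:
  fixes v :: "'a::euclidean_space \<Rightarrow> real" and w :: "'a \<Rightarrow> 'a"
  assumes dv: "\<And>x. (v has_derivative (\<lambda>h. w x \<bullet> h)) (at x)"
    and cw: "continuous_on UNIV w"
    and sv: "\<And>x. R \<le> norm x \<Longrightarrow> v x = 0 \<and> w x = 0"
  shows "v \<in> H1"
proof -
  have cv: "continuous_on UNIV v"
    by (intro continuous_at_imp_continuous_on ballI has_derivative_continuous[OF dv])
  have "integrable lborel (\<lambda>x. (v x)\<^sup>2)"
    by (rule cs_integrable[where R=R]) (use cv sv in \<open>auto intro!: continuous_intros\<close>)
  then show ?thesis unfolding H1_def
    using C1_weak_grad[OF dv cw sv] borel_measurable_continuous_onI[OF cv] by auto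
qed

definition radf :: "(real \<Rightarrow> real) \<Rightarrow> 'a::euclidean_space \<Rightarrow> real" where
  "radf \<Psi> x = \<Psi> (x \<bullet> x)"

definition radg :: "(real \<Rightarrow> real) \<Rightarrow> 'a::euclidean_space \<Rightarrow> 'a" where
  "radg \<Psi>' x = (2 * \<Psi>' (x \<bullet> x)) *\<^sub>R x"

locale profile =
  fixes \<Psi> \<Psi>' :: "real \<Rightarrow> real" and R :: real
  assumes d\<Psi>: "\<And>\<rho>. (\<Psi> has_real_derivative \<Psi>' \<rho>) (at \<rho>)"
    and c\<Psi>': "continuous_on UNIV \<Psi>'"
    and s\<Psi>: "\<And>\<rho>. R \<le> \<rho> \<Longrightarrow> \<Psi> \<rho> = 0 \<and> \<Psi>' \<rho> = 0"
begin

lemma supp_x: "sqrt \<bar>R\<bar> \<le> norm (x::'a::euclidean_space) \<Longrightarrow> R \<le> x \<bullet> x"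
proof -
  assume a: "sqrt \<bar>R\<bar> \<le> norm x"
  have "(sqrt \<bar>R\<bar>)^2 \<le> (norm x)^2" using a by (intro power_mono) auto
  then show ?thesis by (simp add: power2_norm_eq_inner)
qed

lemma rad_deriv: "(radf \<Psi> has_derivative (\<lambda>h. radg \<Psi>' x \<bullet> h)) (at (x::'a::euclidean_space))"
proof -
  have i: "((\<lambda>x. x \<bullet> x) has_derivative (\<lambda>h. x \<bullet> h + h \<bullet> x)) (at x)"
    by (rule has_derivative_inner[OF has_derivative_ident has_derivative_ident])
  have p: "(\<Psi> has_derivative (\<lambda>y. \<Psi>' (x \<bullet> x) * y)) (at (x \<bullet> x))"
    using d\<Psi>[of "x \<bullet> x"] by (simp add: has_field_derivative_def)
  have "((\<lambda>x. \<Psi> (x \<bullet> x)) has_derivative (\<lambda>h. \<Psi>' (x \<bullet> x) * (x \<bullet> h + h \<bullet> x))) (at x)"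
    using has_derivative_compose[OF i p] by (simp add: o_def)
  moreover have "(\<lambda>h. \<Psi>' (x \<bullet> x) * (x \<bullet> h + h \<bullet> x)) = (\<lambda>h. radg \<Psi>' x \<bullet> h)"
    by (auto simp: fun_eq_iff radg_def inner_commute algebra_simps)
  ultimately show ?thesis unfolding radf_def[abs_def] by simp
qed

lemma rad_cont: "continuous_on UNIV (radg \<Psi>' :: 'a::euclidean_space \<Rightarrow> 'a)"
  unfolding radg_def[abs_def]
  by (intro continuous_intros continuous_on_compose2[OF c\<Psi>']) auto

lemma rad_supp: "sqrt \<bar>R\<bar> \<le> norm (x::'a::euclidean_space) \<Longrightarrow> radf \<Psi> x = 0 \<and> radg \<Psi>' x = 0"
proof -
  assume a: "sqrt \<bar>R\<bar> \<le> norm x"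
  have "\<Psi> (x \<bullet> x) = 0 \<and> \<Psi>' (x \<bullet> x) = 0" by (rule s\<Psi>[OF supp_x[OF a]])
  then show ?thesis by (simp add: radf_def radg_def)
qed

lemma rad_weak_grad: "is_weak_grad (radf \<Psi> :: 'a::euclidean_space \<Rightarrow> real) (radg \<Psi>')"
  by (rule C1_weak_grad[OF rad_deriv rad_cont rad_supp])

lemma rad_H1r: "(radf \<Psi> :: 'a::euclidean_space \<Rightarrow> real) \<in> H1r"
proof -
  have "radf \<Psi> \<in> (H1 :: ('a \<Rightarrow> real) set)" by (rule C1_H1[OF rad_deriv rad_cont rad_supp])
  moreover have "radial (radf \<Psi> :: 'a \<Rightarrow> real)"
    unfolding radial_def radf_def by (metis power2_norm_eq_inner)
  ultimately show ?thesis by (simp add: H1r_def)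
qed

lemma rad_grad_sq: "grad_sq (radf \<Psi> :: 'a::euclidean_space \<Rightarrow> real) = (\<integral>x. (norm (radg \<Psi>' x :: 'a))\<^sup>2 \<partial>lborel)"
  by (rule grad_sq_eq[OF rad_weak_grad])

lemma rad_cont_f: "continuous_on UNIV (radf \<Psi> :: 'a::euclidean_space \<Rightarrow> real)"
  by (intro continuous_at_imp_continuous_on ballI has_derivative_continuous[OF rad_deriv])

end

lemma Gprim_deriv:
  assumes g1: "continuous_on UNIV g"
  shows "(Gprim g has_real_derivative g x) (at x)"
proof -
  let ?a = "min 0 x - 1" and ?b = "max 0 x + 1"
  have "((\<lambda>u. LBINT y=ereal 0..u. g y) has_vector_derivative g x) (at x within {?a..?b})"
    by (rule interval_integral_FTC2) (auto intro: continuous_on_subset[OF g1])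
  then have W: "((\<lambda>u. LBINT y=ereal 0..u. g y) has_vector_derivative g x) (at x within {?a<..<?b})"
    by (rule has_vector_derivative_within_subset) auto
  then have "((\<lambda>u. LBINT y=ereal 0..u. g y) has_vector_derivative g x) (at x)"
  proof -
    have m: "?a < x" "x < ?b" by auto
    show ?thesis by (rule has_vector_derivative_within_open[of x "{?a<..<?b}", THEN iffD1, OF _ _ W]) (use m in auto)
  qed
  then show ?thesis unfolding Gprim_def[abs_def] by (simp add: has_real_derivative_iff_has_vector_derivative zero_ereal_def)
qed

lemma Gprim_cont: "continuous_on UNIV g \<Longrightarrow> continuous_on S (Gprim g)"
  by (meson DERIV_continuous Gprim_deriv continuous_at_imp_continuous_on)

lemma Gprim_0[simp]: "Gprim g 0 = 0" by (simp add: Gprim_def zero_ereal_def)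

lemma Gprim_even:
  assumes g1: "continuous_on UNIV g" and odd: "\<forall>s. g (- s) = - g s"
  shows "Gprim g (- s) = Gprim g s"
proof -
  have "\<forall>t. ((\<lambda>t. Gprim g (- t) - Gprim g t) has_real_derivative 0) (at t)"
  proof
    fix t
    have "((\<lambda>t. Gprim g (- t) - Gprim g t) has_real_derivative g (- t) * (- 1) - g t) (at t)"
      by (intro DERIV_diff DERIV_chain2[OF Gprim_deriv[OF g1]] Gprim_deriv[OF g1] derivative_eq_intros) auto
    then show "((\<lambda>t. Gprim g (- t) - Gprim g t) has_real_derivative 0) (at t)" using odd by simp
  qed
  then have "(\<lambda>t. Gprim g (- t) - Gprim g t) s = (\<lambda>t. Gprim g (- t) - Gprim g t) 0"
    by (rule DERIV_isconst_all)
  then show ?thesis by simp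
qed

lemma lambda0_neg:
  assumes g4: "\<exists>s0>0. Gprim g s0 > 0" and lam: "ereal lam < lambda0 g"
  shows "\<exists>s. exp lam / 2 * s\<^sup>2 - Gprim g s < 0"
proof -
  let ?S = "{Gprim g s / s\<^sup>2 | s. s \<noteq> 0}"
  obtain s0 where s0: "s0 > 0" "Gprim g s0 > 0" using g4 by blast
  have s0S: "Gprim g s0 / s0\<^sup>2 \<in> ?S" using s0 by auto
  have pos: "Gprim g s0 / s0\<^sup>2 > 0" using s0 by simp
  have "\<exists>x\<in>?S. exp lam / 2 < x"
  proof (cases "bdd_above ?S")
    case True
    then have "lam < ln (2 * Sup ?S)" using lam by (simp add: lambda0_def)
    moreover have "Sup ?S \<ge> Gprim g s0 / s0\<^sup>2" by (rule cSup_upper[OF s0S True])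
    ultimately have l: "lam < ln (2 * Sup ?S)" and p2: "0 < 2 * Sup ?S" using pos by linarith+
    have "exp lam < exp (ln (2 * Sup ?S))" using l by simp
    then have "exp lam < 2 * Sup ?S" using exp_ln[OF p2] by simp
    then have "exp lam / 2 < Sup ?S" by simp
    then show ?thesis using less_cSup_iff[of ?S] True s0S by blast
  next
    case False
    then show ?thesis unfolding bdd_above_def by (meson linorder_not_le)
  qed
  then obtain s where s: "s \<noteq> 0" "exp lam / 2 < Gprim g s / s\<^sup>2" by blast
  then have "exp lam / 2 * s\<^sup>2 < Gprim g s" by (simp add: field_simps)
  then show ?thesis by auto
qed

definition Hf :: "(real \<Rightarrow> real) \<Rightarrow> real \<Rightarrow> real \<Rightarrow> real" where
  "Hf g lam y = exp lam / 2 * (fcv y)\<^sup>2 - Gprim g (fcv y)"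

lemma Hf_cont: "continuous_on UNIV g \<Longrightarrow> continuous_on S (Hf g lam)"
  unfolding Hf_def[abs_def]
  by (intro continuous_intros continuous_on_compose2[OF Gprim_cont[of g UNIV]] fcv_cont) auto

lemma Hf_0[simp]: "Hf g lam 0 = 0" by (simp add: Hf_def)

lemma Jfun_cs:
  fixes v :: "'a::euclidean_space \<Rightarrow> real"
  assumes g1: "continuous_on UNIV g" and cv: "continuous_on UNIV v" and sv: "\<And>x. R \<le> norm x \<Longrightarrow> v x = 0"
  shows "Jfun g lam v = 1/2 * grad_sq v + (\<integral>x. Hf g lam (v x) \<partial>lborel)"
proof -
  have c1: "continuous_on UNIV (\<lambda>x. (fcv (v x))\<^sup>2)"
    by (intro continuous_intros continuous_on_compose2[OF fcv_cont cv]) auto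
  have c2: "continuous_on UNIV (\<lambda>x. Gprim g (fcv (v x)))"
    by (intro continuous_on_compose2[OF Gprim_cont[OF g1] continuous_on_compose2[OF fcv_cont cv]]) auto
  have i1: "integrable lborel (\<lambda>x. (fcv (v x))\<^sup>2)" by (rule cs_integrable[OF c1, of R]) (use sv in auto)
  have i2: "integrable lborel (\<lambda>x. Gprim g (fcv (v x)))" by (rule cs_integrable[OF c2, of R]) (use sv in auto)
  have "(\<integral>x. Hf g lam (v x) \<partial>lborel) = (\<integral>x. exp lam / 2 * (fcv (v x))\<^sup>2 \<partial>lborel) - (\<integral>x. Gprim g (fcv (v x)) \<partial>lborel)"
    unfolding Hf_def by (rule Bochner_Integration.integral_diff) (use i1 i2 in auto)
  then show ?thesis unfolding Jfun_def by simp
qed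

lemma integral_scale:
  fixes F :: "'a::euclidean_space \<Rightarrow> real"
  assumes Fm: "F \<in> borel_measurable borel" and T: "T > 0"
  shows "(\<integral>x. F x \<partial>lborel) = T ^ DIM('a) * (\<integral>x. F (T *\<^sub>R x) \<partial>lborel)"
proof -
  have "(\<integral>x. F x \<partial>lborel) = (\<integral>x. F x \<partial>density (distr lborel borel (\<lambda>x. 0 + T *\<^sub>R x)) (\<lambda>_. ennreal (\<bar>T\<bar> ^ DIM('a))))"
    using lborel_affine[of T "0::'a"] T by (simp add: ennreal_power)
  also have "\<dots> = (\<integral>x. \<bar>T\<bar> ^ DIM('a) *\<^sub>R F x \<partial>distr lborel borel (\<lambda>x. 0 + T *\<^sub>R x))"
    by (rule integral_density) (use Fm in auto)
  also have "\<dots> = (\<integral>x. \<bar>T\<bar> ^ DIM('a) *\<^sub>R F (0 + T *\<^sub>R x) \<partial>lborel)"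
    by (rule integral_distr) (use Fm in auto)
  also have "\<dots> = T ^ DIM('a) * (\<integral>x. F (T *\<^sub>R x) \<partial>lborel)" using T by simp
  finally show ?thesis .
qed

lemma integral_scale_inv:
  fixes F :: "'a::euclidean_space \<Rightarrow> real"
  assumes Fm: "F \<in> borel_measurable borel" and T: "T > 0"
  shows "(\<integral>x. F ((1/T) *\<^sub>R x) \<partial>lborel) = T ^ DIM('a) * (\<integral>x. F x \<partial>lborel)"
proof -
  have "(\<lambda>x. F ((1/T) *\<^sub>R x)) \<in> borel_measurable borel" using Fm by measurable
  from integral_scale[OF this T] show ?thesis using T by simp
qed

definition ell :: "('k \<Rightarrow> real \<Rightarrow> real) \<Rightarrow> 'k \<Rightarrow> real \<Rightarrow> real" where
  "ell P \<xi> r = psi 0 (1 - r) * P \<xi> r"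
definition ell' :: "('k \<Rightarrow> real \<Rightarrow> real) \<Rightarrow> ('k \<Rightarrow> real \<Rightarrow> real) \<Rightarrow> 'k \<Rightarrow> real \<Rightarrow> real" where
  "ell' P P' \<xi> r = - psi 2 (1 - r) * P \<xi> r + psi 0 (1 - r) * P' \<xi> r"
definition Ps :: "('k \<Rightarrow> real \<Rightarrow> real) \<Rightarrow> real \<Rightarrow> real \<Rightarrow> 'k \<Rightarrow> real \<Rightarrow> real" where
  "Ps P a L \<xi> r = a * (2/pi) * arctan (L * ell P \<xi> r)"
definition Ps' :: "('k \<Rightarrow> real \<Rightarrow> real) \<Rightarrow> ('k \<Rightarrow> real \<Rightarrow> real) \<Rightarrow> real \<Rightarrow> real \<Rightarrow> 'k \<Rightarrow> real \<Rightarrow> real" where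
  "Ps' P P' a L \<xi> r = a * (2/pi) * (L * ell' P P' \<xi> r) / (1 + (L * ell P \<xi> r)\<^sup>2)"
definition PT :: "('k \<Rightarrow> real \<Rightarrow> real) \<Rightarrow> real \<Rightarrow> real \<Rightarrow> real \<Rightarrow> 'k \<Rightarrow> real \<Rightarrow> real" where
  "PT P a L T \<xi> \<rho> = Ps P a L \<xi> (\<rho> / T\<^sup>2)"
definition PT' :: "('k \<Rightarrow> real \<Rightarrow> real) \<Rightarrow> ('k \<Rightarrow> real \<Rightarrow> real) \<Rightarrow> real \<Rightarrow> real \<Rightarrow> real \<Rightarrow> 'k \<Rightarrow> real \<Rightarrow> real" where
  "PT' P P' a L T \<xi> \<rho> = Ps' P P' a L \<xi> (\<rho> / T\<^sup>2) / T\<^sup>2"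

locale fam =
  fixes P P' :: "'k::euclidean_space \<Rightarrow> real \<Rightarrow> real"
  assumes dP: "\<And>\<xi> r. (P \<xi> has_real_derivative P' \<xi> r) (at r)"
    and cP: "continuous_on UNIV (\<lambda>z. P (fst z) (snd z))"
    and cP': "continuous_on UNIV (\<lambda>z. P' (fst z) (snd z))"
    and oddP: "\<And>\<xi> r. P (- \<xi>) r = - P \<xi> r"
begin

lemma one_plus_sq_ne: "1 + (x::real)\<^sup>2 \<noteq> 0"
  using zero_le_power2[of x] by linarith

lemma psi0_deriv: "(psi 0 has_real_derivative psi 2 z) (at z)"
  using psi_deriv[of 0 z] by (simp add: numeral_2_eq_2)

lemma ell_deriv: "(ell P \<xi> has_real_derivative ell' P P' \<xi> r) (at r)"
proof -
  have "((\<lambda>r. psi 0 (1 - r)) has_real_derivative psi 2 (1 - r) * (0 - 1)) (at r)"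
    by (rule DERIV_chain2[OF psi0_deriv]) (auto intro!: derivative_eq_intros)
  then have "((\<lambda>r. psi 0 (1 - r) * P \<xi> r) has_real_derivative
       psi 2 (1 - r) * (0 - 1) * P \<xi> r + P' \<xi> r * psi 0 (1 - r)) (at r)"
    by (rule DERIV_mult[OF _ dP])
  then show ?thesis unfolding ell_def[abs_def] ell'_def by (simp add: algebra_simps)
qed

lemma Ps_deriv: "(Ps P a L \<xi> has_real_derivative Ps' P P' a L \<xi> r) (at r)"
proof -
  have "((\<lambda>r. a * (2/pi) * arctan (L * ell P \<xi> r)) has_real_derivative
      a * (2/pi) * (inverse (1 + (L * ell P \<xi> r)\<^sup>2) * (L * ell' P P' \<xi> r))) (at r)"
    by (intro DERIV_cmult DERIV_chain2[OF DERIV_arctan] DERIV_cmult ell_deriv)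
  then show ?thesis unfolding Ps_def[abs_def] Ps'_def by (simp add: divide_inverse mult_ac)
qed

lemma ell_supp: "1 \<le> r \<Longrightarrow> ell P \<xi> r = 0 \<and> ell' P P' \<xi> r = 0"
  by (simp add: ell_def ell'_def psi_def)

lemma Ps_supp: "1 \<le> r \<Longrightarrow> Ps P a L \<xi> r = 0 \<and> Ps' P P' a L \<xi> r = 0"
  using ell_supp[of r \<xi>] by (simp add: Ps_def Ps'_def)

lemma cP2: "continuous_on S (\<lambda>z. P (f z) (g z))" if "continuous_on S f" "continuous_on S g"
proof -
  have "continuous_on S ((\<lambda>z. P (fst z) (snd z)) \<circ> (\<lambda>z. (f z, g z)))"
    by (rule continuous_on_compose[OF _ continuous_on_subset[OF cP]]) (use that in \<open>auto intro: continuous_intros\<close>)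
  then show ?thesis by (simp add: o_def)
qed

lemma cP2': "continuous_on S (\<lambda>z. P' (f z) (g z))" if "continuous_on S f" "continuous_on S g"
proof -
  have "continuous_on S ((\<lambda>z. P' (fst z) (snd z)) \<circ> (\<lambda>z. (f z, g z)))"
    by (rule continuous_on_compose[OF _ continuous_on_subset[OF cP']]) (use that in \<open>auto intro: continuous_intros\<close>)
  then show ?thesis by (simp add: o_def)
qed

lemma cpsi: "continuous_on S (\<lambda>z. psi m (f z))" if "continuous_on S f"
  by (rule continuous_on_compose2[of UNIV "psi m", OF _ that]) (auto intro: continuous_at_imp_continuous_on psi_cont)

lemma ell_cont: "continuous_on S (\<lambda>z. ell P (f z) (g z))" if "continuous_on S f" "continuous_on S g"
  unfolding ell_def using that by (intro continuous_intros cpsi cP2)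

lemma ell'_cont: "continuous_on S (\<lambda>z. ell' P P' (f z) (g z))" if "continuous_on S f" "continuous_on S g"
proof -
  have c1: "continuous_on S (\<lambda>z. 1 - g z)" using that by (intro continuous_intros)
  show ?thesis unfolding ell'_def
    by (intro continuous_on_add continuous_on_mult continuous_on_minus cpsi[OF c1] cP2[OF that] cP2'[OF that])
qed

lemma Ps_cont: "continuous_on S (\<lambda>z. Ps P a L (f z) (g z))" if "continuous_on S f" "continuous_on S g"
  unfolding Ps_def using that by (intro continuous_intros ell_cont)

lemma Ps'_cont: "continuous_on S (\<lambda>z. Ps' P P' a L (f z) (g z))" if "continuous_on S f" "continuous_on S g"
  unfolding Ps'_def using that
  by (intro continuous_intros ell_cont ell'_cont) (simp_all add: one_plus_sq_ne)

lemma PT_profile: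
  assumes T: "T > 0"
  shows "profile (PT P a L T \<xi>) (PT' P P' a L T \<xi>) (T\<^sup>2)"
proof
  fix \<rho>
  have "((\<lambda>\<rho>. Ps P a L \<xi> (\<rho> / T\<^sup>2)) has_real_derivative Ps' P P' a L \<xi> (\<rho> / T\<^sup>2) * (1 / T\<^sup>2)) (at \<rho>)"
    by (rule DERIV_chain2[OF Ps_deriv DERIV_cdivide[OF DERIV_ident]])
  then show "(PT P a L T \<xi> has_real_derivative PT' P P' a L T \<xi> \<rho>) (at \<rho>)"
    unfolding PT_def[abs_def] PT'_def by simp
next
  show "continuous_on UNIV (PT' P P' a L T \<xi>)"
    unfolding PT'_def[abs_def] by (intro continuous_intros Ps'_cont) (use T in auto)
next
  fix \<rho> assume "T\<^sup>2 \<le> \<rho>"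
  then have "1 \<le> \<rho> / T\<^sup>2" using T by simp
  then show "PT P a L T \<xi> \<rho> = 0 \<and> PT' P P' a L T \<xi> \<rho> = 0"
    using Ps_supp by (simp add: PT_def PT'_def)
qed

lemma P_zero: "P 0 r = 0" using oddP[of 0 r] by simp

lemma Ps_odd: "Ps P a L (- \<xi>) r = - Ps P a L \<xi> r"
  by (simp add: Ps_def ell_def oddP arctan_minus)

lemma Ps_zero: "Ps P a L 0 r = 0"
  by (simp add: Ps_def ell_def P_zero)

end

lemma profile_diff:
  assumes "profile \<Psi>1 \<Psi>1' R" "profile \<Psi>2 \<Psi>2' R"
  shows "profile (\<lambda>\<rho>. \<Psi>1 \<rho> - \<Psi>2 \<rho>) (\<lambda>\<rho>. \<Psi>1' \<rho> - \<Psi>2' \<rho>) R"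
  using assms unfolding profile_def by (auto intro!: DERIV_diff continuous_intros)

lemma radf_diff: "radf (\<lambda>\<rho>. \<Psi>1 \<rho> - \<Psi>2 \<rho>) = (\<lambda>x. radf \<Psi>1 x - radf \<Psi>2 x)"
  by (simp add: radf_def[abs_def])

lemma ind_integral:
  "(\<integral>x. (c::real) * indicator (cball (0::'a::euclidean_space) r) x \<partial>lborel) = c * measure lborel (cball (0::'a) r)"
  by simp

lemma ind_integrable:
  "integrable lborel (\<lambda>x. (c::real) * indicator (cball (0::'a::euclidean_space) r) x)"
proof -
  have "integrable lborel (indicator (cball (0::'a) r) :: 'a \<Rightarrow> real)"
    using emeasure_bounded_finite[OF bounded_cball[of "0::'a" r]] by (simp add: integrable_indicator_iff)
  then show ?thesis by simp
qed

context profile begin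

lemma H1norm_bound:
  assumes R: "R > 0" and e: "\<And>\<rho>. 0 \<le> \<rho> \<Longrightarrow> \<rho> \<le> R \<Longrightarrow> \<bar>\<Psi> \<rho>\<bar> \<le> \<epsilon> \<and> \<bar>\<Psi>' \<rho>\<bar> \<le> \<epsilon>"
  shows "H1norm (radf \<Psi> :: 'a::euclidean_space \<Rightarrow> real) \<le> \<epsilon> * sqrt (measure lborel (cball (0::'a) (sqrt R)) * (1 + 4 * R))"
proof -
  let ?V = "measure lborel (cball (0::'a) (sqrt R))"
  have e0: "0 \<le> \<epsilon>" using e[of 0] R by auto
  have inball: "x \<bullet> x \<le> R" if "x \<in> cball (0::'a) (sqrt R)" for x
  proof -
    have "norm x \<le> sqrt R" using that by simp
    then have "(norm x)^2 \<le> (sqrt R)^2" by (intro power_mono) auto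
    then show ?thesis using R by (simp add: power2_norm_eq_inner)
  qed
  have outball: "R \<le> x \<bullet> x" if "x \<notin> cball (0::'a) (sqrt R)" for x
  proof -
    have "sqrt R \<le> norm x" using that by simp
    then have "(sqrt R)^2 \<le> (norm x)^2" by (intro power_mono) (use R in auto)
    then show ?thesis using R by (simp add: power2_norm_eq_inner)
  qed
  have cf: "continuous_on UNIV (radf \<Psi> :: 'a \<Rightarrow> real)" by (rule rad_cont_f)
  have cg: "continuous_on UNIV (radg \<Psi>' :: 'a \<Rightarrow> 'a)" by (rule rad_cont)
  have sp: "sqrt \<bar>R\<bar> \<le> norm x \<Longrightarrow> radf \<Psi> x = 0 \<and> radg \<Psi>' x = 0" for x :: 'a by (rule rad_supp)
  have I1: "(\<integral>x. (radf \<Psi> (x::'a))\<^sup>2 \<partial>lborel) \<le> (\<integral>x. \<epsilon>\<^sup>2 * indicator (cball (0::'a) (sqrt R)) x \<partial>lborel)"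
  proof (rule Bochner_Integration.integral_mono)
    show "integrable lborel (\<lambda>x::'a. (radf \<Psi> x)\<^sup>2)"
      by (rule cs_integrable[where R="sqrt \<bar>R\<bar>"]) (use cf sp in \<open>auto intro!: continuous_intros\<close>)
    show "integrable lborel (\<lambda>x. \<epsilon>\<^sup>2 * indicator (cball (0::'a) (sqrt R)) x)" by (rule ind_integrable)
    fix x :: 'a
    show "(radf \<Psi> x)\<^sup>2 \<le> \<epsilon>\<^sup>2 * indicator (cball 0 (sqrt R)) x"
    proof (cases "x \<in> cball 0 (sqrt R)")
      case True
      then have "\<bar>\<Psi> (x \<bullet> x)\<bar> \<le> \<epsilon>" using e[of "x \<bullet> x"] inball by auto
      then have "(\<Psi> (x \<bullet> x))\<^sup>2 \<le> \<epsilon>\<^sup>2" by (metis abs_ge_zero power2_abs power_mono)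
      then show ?thesis using True by (simp add: radf_def)
    next
      case False
      then show ?thesis using s\<Psi>[OF outball[OF False]] by (simp add: radf_def)
    qed
  qed
  have I2: "(\<integral>x. (norm (radg \<Psi>' (x::'a)))\<^sup>2 \<partial>lborel) \<le> (\<integral>x. (4 * R * \<epsilon>\<^sup>2) * indicator (cball (0::'a) (sqrt R)) x \<partial>lborel)"
  proof (rule Bochner_Integration.integral_mono)
    show "integrable lborel (\<lambda>x::'a. (norm (radg \<Psi>' x))\<^sup>2)"
      by (rule cs_integrable[where R="sqrt \<bar>R\<bar>"]) (use cg sp in \<open>auto intro!: continuous_intros\<close>)
    show "integrable lborel (\<lambda>x. (4 * R * \<epsilon>\<^sup>2) * indicator (cball (0::'a) (sqrt R)) x)" by (rule ind_integrable)
    fix x :: 'a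
    show "(norm (radg \<Psi>' x))\<^sup>2 \<le> (4 * R * \<epsilon>\<^sup>2) * indicator (cball 0 (sqrt R)) x"
    proof (cases "x \<in> cball 0 (sqrt R)")
      case True
      have a: "\<bar>\<Psi>' (x \<bullet> x)\<bar> \<le> \<epsilon>" using e[of "x \<bullet> x"] inball True by auto
      have a2: "(\<Psi>' (x \<bullet> x))\<^sup>2 \<le> \<epsilon>\<^sup>2" using a by (metis abs_ge_zero power2_abs power_mono)
      have "(norm (radg \<Psi>' x))\<^sup>2 = 4 * (\<Psi>' (x \<bullet> x))\<^sup>2 * (x \<bullet> x)"
        by (simp add: radg_def power2_norm_eq_inner power_mult_distrib)
      also have "\<dots> \<le> 4 * \<epsilon>\<^sup>2 * R"
        using inball[OF True] a2 by (intro mult_mono) auto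
      finally show ?thesis using True by (simp add: mult_ac)
    next
      case False
      then show ?thesis using s\<Psi>[OF outball[OF False]] by (simp add: radg_def)
    qed
  qed
  have "H1norm (radf \<Psi> :: 'a \<Rightarrow> real) = sqrt ((\<integral>x. (radf \<Psi> (x::'a))\<^sup>2 \<partial>lborel) + (\<integral>x. (norm (radg \<Psi>' x :: 'a))\<^sup>2 \<partial>lborel))"
    unfolding H1norm_def rad_grad_sq ..
  also have "\<dots> \<le> sqrt (\<epsilon>\<^sup>2 * ?V + (4 * R * \<epsilon>\<^sup>2) * ?V)"
    using I1 I2 unfolding ind_integral by (intro real_sqrt_le_mono) linarith
  also have "\<epsilon>\<^sup>2 * ?V + (4 * R * \<epsilon>\<^sup>2) * ?V = \<epsilon>\<^sup>2 * (?V * (1 + 4 * R))" by (simp add: algebra_simps)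
  also have "sqrt \<dots> = \<epsilon> * sqrt (?V * (1 + 4 * R))" using e0 by (simp add: real_sqrt_mult)
  finally show ?thesis .
qed

end

context fam begin

lemma Ps_profile: "profile (Ps P a L \<xi>) (Ps' P P' a L \<xi>) 1"
  using PT_profile[of 1 a L \<xi>] by (simp add: PT_def[abs_def] PT'_def[abs_def])

lemma PT_cont2: "T \<noteq> 0 \<Longrightarrow> continuous_on UNIV (\<lambda>z. PT P a L T (fst z) (snd z))"
  unfolding PT_def by (intro Ps_cont continuous_intros) auto

lemma PT'_cont2: "T \<noteq> 0 \<Longrightarrow> continuous_on UNIV (\<lambda>z. PT' P P' a L T (fst z) (snd z))"
  unfolding PT'_def by (intro Ps'_cont continuous_intros) auto

lemma fam_cont:
  assumes T: "T > 0"
  shows "cont_H1r (cball 0 1) (\<lambda>\<xi>. radf (PT P a L T \<xi>) :: 'a::euclidean_space \<Rightarrow> real)"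
  unfolding cont_H1r_def
proof (intro conjI ballI allI impI)
  fix \<xi> :: 'k
  show "radf (PT P a L T \<xi>) \<in> (H1r :: ('a \<Rightarrow> real) set)"
    by (rule profile.rad_H1r[OF PT_profile[OF T]])
next
  fix \<xi> :: 'k and \<epsilon> :: real assume \<xi>: "\<xi> \<in> cball 0 1" and e: "\<epsilon> > 0"
  let ?K = "cball (0::'k) 1 \<times> {0..T\<^sup>2}"
  define C where "C = sqrt (measure lborel (cball (0::'a) (sqrt (T\<^sup>2))) * (1 + 4 * T\<^sup>2))"
  have C0: "0 \<le> C" unfolding C_def by (simp add: add_pos_nonneg)
  define e' where "e' = \<epsilon> / (C + 1)"
  have e': "e' > 0" using e C0 by (simp add: e'_def)
  have e'C: "e' * C < \<epsilon>"
  proof -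
    have "e' * C = \<epsilon> * (C / (C + 1))" by (simp add: e'_def)
    also have "\<dots> < \<epsilon> * 1" using e C0 by (intro mult_strict_left_mono) auto
    finally show ?thesis by simp
  qed
  have cK: "compact ?K" by (intro compact_Times) auto
  have T0: "T \<noteq> 0" using T by simp
  have uc1: "uniformly_continuous_on ?K (\<lambda>z. PT P a L T (fst z) (snd z))"
    by (rule compact_uniformly_continuous[OF continuous_on_subset[OF PT_cont2[OF T0]] cK]) simp
  have uc2: "uniformly_continuous_on ?K (\<lambda>z. PT' P P' a L T (fst z) (snd z))"
    by (rule compact_uniformly_continuous[OF continuous_on_subset[OF PT'_cont2[OF T0]] cK]) simp
  obtain d1 where d1: "d1 > 0" "\<And>x x'. x \<in> ?K \<Longrightarrow> x' \<in> ?K \<Longrightarrow> dist x' x < d1 \<Longrightarrow>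
      dist (PT P a L T (fst x') (snd x')) (PT P a L T (fst x) (snd x)) < e'"
    using uc1 e' unfolding uniformly_continuous_on_def by metis
  obtain d2 where d2: "d2 > 0" "\<And>x x'. x \<in> ?K \<Longrightarrow> x' \<in> ?K \<Longrightarrow> dist x' x < d2 \<Longrightarrow>
      dist (PT' P P' a L T (fst x') (snd x')) (PT' P P' a L T (fst x) (snd x)) < e'"
    using uc2 e' unfolding uniformly_continuous_on_def by metis
  show "\<exists>\<delta>>0. \<forall>\<eta>\<in>cball 0 1. dist \<eta> \<xi> < \<delta> \<longrightarrow>
          H1norm (\<lambda>x::'a. radf (PT P a L T \<eta>) x - radf (PT P a L T \<xi>) x) < \<epsilon>"
  proof (intro exI[of _ "min d1 d2"] conjI ballI impI)
    show "0 < min d1 d2" using d1 d2 by simp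
    fix \<eta> :: 'k assume \<eta>: "\<eta> \<in> cball 0 1" and d: "dist \<eta> \<xi> < min d1 d2"
    have pd: "profile (\<lambda>\<rho>. PT P a L T \<eta> \<rho> - PT P a L T \<xi> \<rho>) (\<lambda>\<rho>. PT' P P' a L T \<eta> \<rho> - PT' P P' a L T \<xi> \<rho>) (T\<^sup>2)"
      by (rule profile_diff[OF PT_profile[OF T] PT_profile[OF T]])
    have bnd: "\<bar>PT P a L T \<eta> \<rho> - PT P a L T \<xi> \<rho>\<bar> \<le> e' \<and> \<bar>PT' P P' a L T \<eta> \<rho> - PT' P P' a L T \<xi> \<rho>\<bar> \<le> e'"
      if "0 \<le> \<rho>" "\<rho> \<le> T\<^sup>2" for \<rho>
    proof -
      have m: "(\<xi>, \<rho>) \<in> ?K" "(\<eta>, \<rho>) \<in> ?K" using \<xi> \<eta> that by auto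
      have dd: "dist (\<eta>, \<rho>) (\<xi>, \<rho>) = dist \<eta> \<xi>" by (simp add: dist_Pair_Pair)
      have "dist (PT P a L T \<eta> \<rho>) (PT P a L T \<xi> \<rho>) < e'"
        using d1(2)[OF m, simplified] d dd by simp
      moreover have "dist (PT' P P' a L T \<eta> \<rho>) (PT' P P' a L T \<xi> \<rho>) < e'"
        using d2(2)[OF m, simplified] d dd by simp
      ultimately show ?thesis by (simp add: dist_real_def)
    qed
    have "H1norm (radf (\<lambda>\<rho>. PT P a L T \<eta> \<rho> - PT P a L T \<xi> \<rho>) :: 'a \<Rightarrow> real) \<le> e' * C"
      unfolding C_def by (rule profile.H1norm_bound[OF pd]) (use T bnd in auto)
    then show "H1norm (\<lambda>x::'a. radf (PT P a L T \<eta>) x - radf (PT P a L T \<xi>) x) < \<epsilon>"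
      using e'C by (simp add: radf_diff)
  qed
qed

end

context fam begin

lemma fam_J:
  assumes T: "T > 0" and g1: "continuous_on UNIV g"
  shows "Jfun g lam (radf (PT P a L T \<xi>) :: 'a::euclidean_space \<Rightarrow> real) =
     1/2 * (T ^ DIM('a) / T\<^sup>2) * (\<integral>y. (norm (radg (Ps' P P' a L \<xi>) y :: 'a))\<^sup>2 \<partial>lborel)
     + T ^ DIM('a) * (\<integral>y. Hf g lam (radf (Ps P a L \<xi>) (y::'a)) \<partial>lborel)"
proof -
  interpret p: profile "PT P a L T \<xi>" "PT' P P' a L T \<xi>" "T\<^sup>2" by (rule PT_profile[OF T])
  interpret q: profile "Ps P a L \<xi>" "Ps' P P' a L \<xi>" 1 by (rule Ps_profile)
  have T0: "T \<noteq> 0" using T by simp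
  have J: "Jfun g lam (radf (PT P a L T \<xi>) :: 'a \<Rightarrow> real) =
      1/2 * grad_sq (radf (PT P a L T \<xi>) :: 'a \<Rightarrow> real) + (\<integral>x. Hf g lam (radf (PT P a L T \<xi>) (x::'a)) \<partial>lborel)"
    by (rule Jfun_cs[OF g1 p.rad_cont_f, of T]) (use p.rad_supp T in auto)
  have e1: "radf (PT P a L T \<xi>) x = radf (Ps P a L \<xi>) ((1/T) *\<^sub>R x)" for x :: 'a
    unfolding radf_def PT_def by (simp add: power2_eq_square field_simps)
  have e2: "(norm (radg (PT' P P' a L T \<xi>) x))\<^sup>2 = 1 / T\<^sup>2 * (norm (radg (Ps' P P' a L \<xi>) ((1/T) *\<^sub>R x)))\<^sup>2" for x :: 'a
  proof -
    have a: "((1/T) *\<^sub>R x) \<bullet> ((1/T) *\<^sub>R x) = x \<bullet> x / T\<^sup>2" by (simp add: power2_eq_square field_simps)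
    show ?thesis unfolding radg_def PT'_def a
      by (simp add: power_mult_distrib power2_eq_square field_simps T0)
  qed
  have m1: "(\<lambda>y::'a. 1 / T\<^sup>2 * (norm (radg (Ps' P P' a L \<xi>) y))\<^sup>2) \<in> borel_measurable borel"
    by (intro borel_measurable_continuous_onI continuous_intros q.rad_cont)
  have m2: "(\<lambda>y::'a. Hf g lam (radf (Ps P a L \<xi>) y)) \<in> borel_measurable borel"
    by (intro borel_measurable_continuous_onI continuous_on_compose2[OF Hf_cont[OF g1] q.rad_cont_f]) auto
  have G: "grad_sq (radf (PT P a L T \<xi>) :: 'a \<Rightarrow> real) = T ^ DIM('a) / T\<^sup>2 * (\<integral>y. (norm (radg (Ps' P P' a L \<xi>) y :: 'a))\<^sup>2 \<partial>lborel)"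
  proof -
    have "grad_sq (radf (PT P a L T \<xi>) :: 'a \<Rightarrow> real) = (\<integral>x. (norm (radg (PT' P P' a L T \<xi>) x :: 'a))\<^sup>2 \<partial>lborel)"
      by (rule p.rad_grad_sq)
    also have "\<dots> = (\<integral>x. 1 / T\<^sup>2 * (norm (radg (Ps' P P' a L \<xi>) ((1/T) *\<^sub>R x) :: 'a))\<^sup>2 \<partial>lborel)"
      unfolding e2 ..
    also have "\<dots> = T ^ DIM('a) * (\<integral>y. 1 / T\<^sup>2 * (norm (radg (Ps' P P' a L \<xi>) y :: 'a))\<^sup>2 \<partial>lborel)"
      by (rule integral_scale_inv[OF m1 T])
    also have "\<dots> = T ^ DIM('a) / T\<^sup>2 * (\<integral>y. (norm (radg (Ps' P P' a L \<xi>) y :: 'a))\<^sup>2 \<partial>lborel)"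
      by simp
    finally show ?thesis .
  qed
  have H: "(\<integral>x. Hf g lam (radf (PT P a L T \<xi>) (x::'a)) \<partial>lborel) = T ^ DIM('a) * (\<integral>y. Hf g lam (radf (Ps P a L \<xi>) (y::'a)) \<partial>lborel)"
    unfolding e1 by (rule integral_scale_inv[OF m2 T])
  show ?thesis unfolding J G H by simp
qed

end

lemma sphere_null: "sphere (c::'a::euclidean_space) r \<in> null_sets lborel"
  using negligible_sphere[of c r]
  by (auto simp: null_sets_completion_iff negligible_iff_null_sets negligible_convex_frontier)

lemma Ps_abs: "\<bar>Ps P a L \<xi> r\<bar> \<le> \<bar>a\<bar>"
proof -
  have "\<bar>arctan (L * ell P \<xi> r)\<bar> \<le> pi / 2" using arctan_bounded[of "L * ell P \<xi> r"] by linarith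
  then have "\<bar>2 / pi * arctan (L * ell P \<xi> r)\<bar> \<le> 1" by (simp add: abs_mult field_simps)
  then have "\<bar>a\<bar> * \<bar>2 / pi * arctan (L * ell P \<xi> r)\<bar> \<le> \<bar>a\<bar> * 1" by (intro mult_left_mono) auto
  then show ?thesis by (simp add: Ps_def abs_mult mult_ac)
qed

lemma Hf_bounded:
  assumes g1: "continuous_on UNIV g"
  shows "\<exists>C\<ge>0. \<forall>t. \<bar>t\<bar> \<le> b \<longrightarrow> \<bar>Hf g lam t\<bar> \<le> C"
proof -
  have "compact (Hf g lam ` {-b..b})"
    by (rule compact_continuous_image[OF Hf_cont[OF g1]]) simp
  then obtain C where C: "\<forall>y\<in>Hf g lam ` {-b..b}. norm y \<le> C"
    using compact_imp_bounded bounded_iff by metis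
  have "\<bar>Hf g lam t\<bar> \<le> max C 0" if "\<bar>t\<bar> \<le> b" for t
  proof -
    have "Hf g lam t \<in> Hf g lam ` {-b..b}" using that by (intro imageI) (simp add: abs_le_iff)
    then have "norm (Hf g lam t) \<le> C" using C by blast
    then show ?thesis by simp
  qed
  then show ?thesis by (intro exI[of _ "max C 0"]) auto
qed

context fam begin

lemma P_cont_at: "isCont (\<lambda>\<xi>. P \<xi> r) \<xi>"
proof -
  have "continuous_on UNIV (\<lambda>\<xi>. P (id \<xi>) ((\<lambda>_. r) \<xi>))" by (rule cP2) (auto intro: continuous_intros)
  then show ?thesis by (simp add: continuous_on_eq_continuous_at)
qed

lemma Ps_lim:
  assumes z: "\<zeta> \<longlonglongrightarrow> l" and Lq: "filterlim Lq at_top sequentially"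
    and r: "0 \<le> r" "r < 1" and Pl: "P l r \<noteq> 0"
  shows "(\<lambda>n. Ps P a (Lq n) (\<zeta> n) r) \<longlonglongrightarrow> a * sgn (P l r)"
proof -
  let ?c = "psi 0 (1 - r)"
  have c: "?c > 0" using r by (simp add: psi_def)
  have u: "(\<lambda>n. ell P (\<zeta> n) r) \<longlonglongrightarrow> ?c * P l r"
    unfolding ell_def by (intro tendsto_mult tendsto_const isCont_tendsto_compose[OF P_cont_at z])
  have e: "Ps P a (Lq n) (\<zeta> n) r = a * (2/pi) * arctan (ell P (\<zeta> n) r * Lq n)" for n
    by (simp add: Ps_def mult.commute)
  show ?thesis
  proof (cases "P l r > 0")
    case True
    have "filterlim (\<lambda>n. ell P (\<zeta> n) r * Lq n) at_top sequentially"
      by (rule filterlim_tendsto_pos_mult_at_top[OF u _ Lq]) (use c True in simp)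
    then have "(\<lambda>n. arctan (ell P (\<zeta> n) r * Lq n)) \<longlonglongrightarrow> pi/2"
      by (rule filterlim_compose[OF tendsto_arctan_at_top])
    then have "(\<lambda>n. a * (2/pi) * arctan (ell P (\<zeta> n) r * Lq n)) \<longlonglongrightarrow> a * (2/pi) * (pi/2)"
      by (intro tendsto_intros)
    then show ?thesis unfolding e using True by simp
  next
    case False
    then have neg: "P l r < 0" using Pl by simp
    have "filterlim (\<lambda>n. ell P (\<zeta> n) r * Lq n) at_bot sequentially"
      by (rule filterlim_tendsto_neg_mult_at_bot[OF u _ Lq]) (use c neg in \<open>simp add: mult_pos_neg\<close>)
    then have "(\<lambda>n. arctan (ell P (\<zeta> n) r * Lq n)) \<longlonglongrightarrow> - (pi/2)"
      by (rule filterlim_compose[OF tendsto_arctan_at_bot])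
    then have "(\<lambda>n. a * (2/pi) * arctan (ell P (\<zeta> n) r * Lq n)) \<longlonglongrightarrow> a * (2/pi) * (- (pi/2))"
      by (intro tendsto_intros)
    then show ?thesis unfolding e using neg by simp
  qed
qed

lemma B_uniform:
  fixes K :: "'k set" and a :: real
  assumes g1: "continuous_on UNIV g" and K: "compact K"
    and hK: "\<And>\<xi>. \<xi> \<in> K \<Longrightarrow> AE y in lborel. (y::'a::euclidean_space) \<bullet> y < 1 \<longrightarrow> P \<xi> (y \<bullet> y) \<noteq> 0"
    and hs: "\<And>\<xi> r. \<xi> \<in> K \<Longrightarrow> 0 \<le> r \<Longrightarrow> r < 1 \<Longrightarrow> P \<xi> r \<noteq> 0 \<Longrightarrow> Hf g lam (a * sgn (P \<xi> r)) = Hf g lam a"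
    and Ha: "Hf g lam a < 0"
  shows "\<exists>L>0. \<forall>\<xi>\<in>K. (\<integral>y. Hf g lam (radf (Ps P a L \<xi>) (y::'a)) \<partial>lborel) \<le> Hf g lam a * measure lborel (ball (0::'a) 1) / 2"
proof (rule ccontr)
  define V where "V = measure lborel (ball (0::'a) 1)"
  have V: "V > 0"
  proof -
    have "emeasure lborel (ball (0::'a) 1) = ennreal (unit_ball_vol (real DIM('a)))"
      using emeasure_ball[where c="0::'a" and r=1] by simp
    then have "V = unit_ball_vol (real DIM('a))" unfolding V_def measure_def by simp
    then show ?thesis by simp
  qed
  define B where "B L \<xi> = (\<integral>y. Hf g lam (radf (Ps P a L \<xi>) (y::'a)) \<partial>lborel)" for L \<xi>
  assume "\<not> ?thesis"
  then have nt: "\<exists>\<xi>\<in>K. B L \<xi> > Hf g lam a * V / 2" if "L > 0" for L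
    using that unfolding B_def V_def by (auto simp: not_le)
  have "\<exists>\<xi>. \<xi> \<in> K \<and> B (real n + 1) \<xi> > Hf g lam a * V / 2" for n
    using nt[of "real n + 1"] by auto
  then have "\<forall>n. \<exists>\<xi>. \<xi> \<in> K \<and> B (real n + 1) \<xi> > Hf g lam a * V / 2" by blast
  from choice[OF this] obtain \<xi> where \<xi>0: "\<forall>n. \<xi> n \<in> K \<and> B (real n + 1) (\<xi> n) > Hf g lam a * V / 2"
    by blast
  have \<xi>: "\<And>n. \<xi> n \<in> K" "\<And>n. B (real n + 1) (\<xi> n) > Hf g lam a * V / 2" using \<xi>0 by auto
  obtain l r where l: "l \<in> K" and r: "strict_mono r" and lim: "(\<xi> \<circ> r) \<longlonglongrightarrow> l"
    using seq_compactE[OF compact_imp_seq_compact[OF K], of \<xi>] \<xi>(1) by blast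
  define Lq where "Lq n = real (r n) + 1" for n
  define \<zeta> where "\<zeta> n = \<xi> (r n)" for n
  have zl: "\<zeta> \<longlonglongrightarrow> l" using lim unfolding \<zeta>_def[abs_def] by (simp add: o_def)
  have Lt: "filterlim Lq at_top sequentially"
  proof -
    have "filterlim (\<lambda>n. real (r n)) at_top sequentially"
      by (rule filterlim_compose[OF filterlim_real_sequentially filterlim_subseq[OF r]])
    then have "filterlim (\<lambda>n. 1 + real (r n)) at_top sequentially"
      by (rule filterlim_tendsto_add_at_top[OF tendsto_const])
    then show ?thesis unfolding Lq_def by (simp add: add.commute)
  qed
  obtain C where C0: "C \<ge> 0" and C: "\<And>t. \<bar>t\<bar> \<le> \<bar>a\<bar> \<Longrightarrow> \<bar>Hf g lam t\<bar> \<le> C"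
    using Hf_bounded[OF g1, of "\<bar>a\<bar>" lam] by blast
  have supp: "radf (Ps P a L \<zeta>') y = 0" if "1 \<le> y \<bullet> y" for L \<zeta>' and y :: 'a
    using Ps_supp[OF that] by (simp add: radf_def)
  have conv: "(\<lambda>n. \<integral>y. Hf g lam (radf (Ps P a (Lq n) (\<zeta> n)) (y::'a)) \<partial>lborel) \<longlonglongrightarrow>
      (\<integral>y. Hf g lam a * indicator (ball (0::'a) 1) y \<partial>lborel)"
  proof (rule integral_dominated_convergence[where w="\<lambda>y::'a. C * indicator (cball 0 1) y"])
    show "(\<lambda>y::'a. Hf g lam a * indicator (ball 0 1) y) \<in> borel_measurable lborel"
      by (intro borel_measurable_times borel_measurable_const borel_measurable_indicator) simp
    show "(\<lambda>y::'a. Hf g lam (radf (Ps P a (Lq n) (\<zeta> n)) y)) \<in> borel_measurable lborel" for n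
    proof -
      interpret q: profile "Ps P a (Lq n) (\<zeta> n)" "Ps' P P' a (Lq n) (\<zeta> n)" 1 by (rule Ps_profile)
      have "continuous_on UNIV (\<lambda>y::'a. Hf g lam (radf (Ps P a (Lq n) (\<zeta> n)) y))"
        by (intro continuous_on_compose2[OF Hf_cont[OF g1] q.rad_cont_f]) auto
      then show ?thesis using borel_measurable_continuous_onI by simp
    qed
    show "integrable lborel (\<lambda>y::'a. C * indicator (cball 0 1) y)" by (rule ind_integrable)
    show "AE y in lborel. norm (Hf g lam (radf (Ps P a (Lq n) (\<zeta> n)) (y::'a))) \<le> C * indicator (cball 0 1) y" for n
    proof (rule AE_I2)
      fix y :: 'a
      show "norm (Hf g lam (radf (Ps P a (Lq n) (\<zeta> n)) y)) \<le> C * indicator (cball 0 1) y"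
      proof (cases "y \<in> cball 0 1")
        case True
        have "\<bar>radf (Ps P a (Lq n) (\<zeta> n)) y\<bar> \<le> \<bar>a\<bar>" unfolding radf_def by (rule Ps_abs)
        then show ?thesis using C True by simp
      next
        case False
        then have "1 < norm y" by simp
        then have "1 \<le> y \<bullet> y" by (metis less_imp_le norm_ge_zero one_less_power power2_norm_eq_inner pos2)
        then show ?thesis using supp False C0 by simp
      qed
    qed
    have ae1: "AE y in lborel. (y::'a) \<bullet> y < 1 \<longrightarrow> P l (y \<bullet> y) \<noteq> 0" by (rule hK[OF l])
    have ae2: "AE y in lborel. (y::'a) \<notin> sphere 0 1" by (rule AE_not_in[OF sphere_null])
    show "AE y in lborel. (\<lambda>n. Hf g lam (radf (Ps P a (Lq n) (\<zeta> n)) (y::'a))) \<longlonglongrightarrow> Hf g lam a * indicator (ball 0 1) y"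
      using ae1 ae2
    proof eventually_elim
      case (elim y)
      show ?case
      proof (cases "y \<bullet> y < 1")
        case True
        have yb: "y \<in> ball 0 1"
          using True by (simp add: power2_norm_eq_inner[symmetric] abs_square_less_1)
        have P0: "P l (y \<bullet> y) \<noteq> 0" using elim True by simp
        have "(\<lambda>n. Ps P a (Lq n) (\<zeta> n) (y \<bullet> y)) \<longlonglongrightarrow> a * sgn (P l (y \<bullet> y))"
          by (rule Ps_lim[OF zl Lt _ True P0]) simp
        then have "(\<lambda>n. Hf g lam (Ps P a (Lq n) (\<zeta> n) (y \<bullet> y))) \<longlonglongrightarrow> Hf g lam (a * sgn (P l (y \<bullet> y)))"
        proof -
          have "isCont (Hf g lam) (a * sgn (P l (y \<bullet> y)))"
            using Hf_cont[OF g1, of UNIV] by (simp add: continuous_on_eq_continuous_at)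
          then show ?thesis by (rule isCont_tendsto_compose) fact
        qed
        then show ?thesis using hs[OF l _ True P0] yb by (simp add: radf_def)
      next
        case False
        then have n1: "1 \<le> y \<bullet> y" by simp
        have "y \<notin> ball 0 1"
        proof
          assume "y \<in> ball 0 1"
          then have "norm y < 1" by simp
          then have "(norm y)^2 < 1" by (simp add: abs_square_less_1)
          then show False using n1 by (simp add: power2_norm_eq_inner)
        qed
        then show ?thesis using supp[OF n1] by simp
      qed
    qed
  qed
  have IV: "(\<integral>y. Hf g lam a * indicator (ball (0::'a) 1) y \<partial>lborel) = Hf g lam a * V"
    unfolding V_def by simp
  have lb: "Hf g lam a * V / 2 \<le> (\<integral>y. Hf g lam (radf (Ps P a (Lq n) (\<zeta> n)) (y::'a)) \<partial>lborel)" for n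
    using \<xi>(2)[of "r n"] unfolding B_def Lq_def \<zeta>_def by simp
  have "Hf g lam a * V / 2 \<le> (\<integral>y. Hf g lam a * indicator (ball (0::'a) 1) y \<partial>lborel)"
    by (rule LIMSEQ_le_const[OF conv]) (use lb in blast)
  then have "Hf g lam a * V / 2 \<le> Hf g lam a * V" unfolding IV .
  moreover have "Hf g lam a * V < 0" using Ha V by (simp add: mult_neg_pos)
  ultimately show False by linarith
qed

lemma A_bound:
  "\<exists>M. \<forall>\<xi>\<in>cball 0 1. (\<integral>y. (norm (radg (Ps' P P' a L \<xi>) y :: 'a::euclidean_space))\<^sup>2 \<partial>lborel) \<le> M"
proof -
  let ?K = "cball (0::'k) 1 \<times> {0..1::real}"
  have "compact ((\<lambda>z. Ps' P P' a L (fst z) (snd z)) ` ?K)"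
    by (intro compact_continuous_image Ps'_cont continuous_intros compact_Times) auto
  then obtain M0 where M0: "\<forall>y\<in>(\<lambda>z. Ps' P P' a L (fst z) (snd z)) ` ?K. norm y \<le> M0"
    using compact_imp_bounded bounded_iff by metis
  have b: "\<bar>Ps' P P' a L \<xi> r\<bar> \<le> M0" if "\<xi> \<in> cball 0 1" "0 \<le> r" "r \<le> 1" for \<xi> r
  proof -
    have "(\<xi>, r) \<in> ?K" using that by simp
    then show ?thesis using M0 by fastforce
  qed
  show ?thesis
  proof (intro exI[of _ "4 * M0\<^sup>2 * measure lborel (cball (0::'a) 1)"] ballI)
    fix \<xi> :: 'k assume \<xi>: "\<xi> \<in> cball 0 1"
    interpret q: profile "Ps P a L \<xi>" "Ps' P P' a L \<xi>" 1 by (rule Ps_profile)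
    have "(\<integral>y. (norm (radg (Ps' P P' a L \<xi>) y :: 'a))\<^sup>2 \<partial>lborel) \<le> (\<integral>y. (4 * M0\<^sup>2) * indicator (cball (0::'a) 1) y \<partial>lborel)"
    proof (rule Bochner_Integration.integral_mono)
      show "integrable lborel (\<lambda>y::'a. (norm (radg (Ps' P P' a L \<xi>) y))\<^sup>2)"
        by (rule cs_integrable[where R=1]) (use q.rad_cont q.rad_supp in \<open>auto intro!: continuous_intros\<close>)
      show "integrable lborel (\<lambda>y. (4 * M0\<^sup>2) * indicator (cball (0::'a) 1) y)" by (rule ind_integrable)
      fix y :: 'a
      show "(norm (radg (Ps' P P' a L \<xi>) y))\<^sup>2 \<le> (4 * M0\<^sup>2) * indicator (cball 0 1) y"
      proof (cases "y \<in> cball 0 1")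
        case True
        have yy: "y \<bullet> y \<le> 1" "0 \<le> y \<bullet> y" using True
          by (auto simp: power2_norm_eq_inner[symmetric] abs_square_le_1)
        have "\<bar>Ps' P P' a L \<xi> (y \<bullet> y)\<bar> \<le> M0" by (rule b[OF \<xi> yy(2) yy(1)])
        then have s: "(Ps' P P' a L \<xi> (y \<bullet> y))\<^sup>2 \<le> M0\<^sup>2" by (metis abs_ge_zero power2_abs power_mono)
        have "(norm (radg (Ps' P P' a L \<xi>) y))\<^sup>2 = 4 * (Ps' P P' a L \<xi> (y \<bullet> y))\<^sup>2 * (y \<bullet> y)"
          by (simp add: radg_def power2_norm_eq_inner power_mult_distrib)
        also have "\<dots> \<le> 4 * M0\<^sup>2 * 1" using s yy by (intro mult_mono) auto
        finally show ?thesis using True by simp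
      next
        case False
        then have "1 \<le> norm y" by simp
        then show ?thesis using q.rad_supp[of y] False by simp
      qed
    qed
    then show "(\<integral>y. (norm (radg (Ps' P P' a L \<xi>) y :: 'a))\<^sup>2 \<partial>lborel) \<le> 4 * M0\<^sup>2 * measure lborel (cball (0::'a) 1)"
      by (simp add: ind_integral)
  qed
qed

end

lemma cont_H1r_mono: "cont_H1r D \<gamma> \<Longrightarrow> D' \<subseteq> D \<Longrightarrow> cont_H1r D' \<gamma>"
  unfolding cont_H1r_def by (meson subsetD)

context fam begin

lemma fam_main:
  fixes K :: "'k set" and a :: real
  assumes g1: "continuous_on UNIV g" and K: "compact K" and Kc: "K \<subseteq> cball 0 1"
    and hK: "\<And>\<xi>. \<xi> \<in> K \<Longrightarrow> AE y in lborel. (y::'a::euclidean_space) \<bullet> y < 1 \<longrightarrow> P \<xi> (y \<bullet> y) \<noteq> 0"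
    and hs: "\<And>\<xi> r. \<xi> \<in> K \<Longrightarrow> 0 \<le> r \<Longrightarrow> r < 1 \<Longrightarrow> P \<xi> r \<noteq> 0 \<Longrightarrow> Hf g lam (a * sgn (P \<xi> r)) = Hf g lam a"
    and Ha: "Hf g lam a < 0"
  shows "\<exists>L T. T > 0 \<and> (\<forall>\<xi>\<in>K. Jfun g lam (radf (PT P a L T \<xi>) :: 'a \<Rightarrow> real) < 0)"
proof -
  define V where "V = measure lborel (ball (0::'a) 1)"
  have V: "V > 0"
  proof -
    have "emeasure lborel (ball (0::'a) 1) = ennreal (unit_ball_vol (real DIM('a)))"
      using emeasure_ball[where c="0::'a" and r=1] by simp
    then have "V = unit_ball_vol (real DIM('a))" unfolding V_def measure_def by simp
    then show ?thesis by simp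
  qed
  obtain L where L: "L > 0" and BL: "\<And>\<xi>. \<xi> \<in> K \<Longrightarrow> (\<integral>y. Hf g lam (radf (Ps P a L \<xi>) (y::'a)) \<partial>lborel) \<le> Hf g lam a * V / 2"
    using B_uniform[OF g1 K hK hs Ha] unfolding V_def by blast
  obtain M0 where M0: "\<And>\<xi>. \<xi> \<in> cball 0 1 \<Longrightarrow> (\<integral>y. (norm (radg (Ps' P P' a L \<xi>) y :: 'a))\<^sup>2 \<partial>lborel) \<le> M0"
    using A_bound[of a L] by blast
  define M where "M = max M0 0"
  define \<beta> where "\<beta> = - (Hf g lam a * V / 2)"
  have \<beta>: "\<beta> > 0" using Ha V by (simp add: \<beta>_def mult_neg_pos)
  define T where "T = sqrt (M / (2 * \<beta>)) + 1"
  have M: "M \<ge> 0" by (simp add: M_def)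
  have sq0: "0 \<le> sqrt (M / (2 * \<beta>))" using M \<beta> by simp
  have T: "T > 0" unfolding T_def using sq0 by linarith
  have T2: "M / (2 * \<beta>) < T\<^sup>2"
  proof -
    have "sqrt (M / (2 * \<beta>)) < T" unfolding T_def by simp
    then have "(sqrt (M / (2 * \<beta>)))\<^sup>2 < T\<^sup>2" using sq0 by (intro power_strict_mono) auto
    moreover have "0 \<le> M / (2 * \<beta>)" using M \<beta> by simp
    ultimately show ?thesis by simp
  qed
  have key: "M / (2 * T\<^sup>2) < \<beta>"
  proof -
    have "M < T\<^sup>2 * (2 * \<beta>)" using T2 \<beta> by (simp add: field_simps)
    then show ?thesis using T by (simp add: field_simps)
  qed
  show ?thesis
  proof (intro exI conjI ballI)
    show "T > 0" by (rule T)
    fix \<xi> assume \<xi>: "\<xi> \<in> K"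
    let ?A = "(\<integral>y. (norm (radg (Ps' P P' a L \<xi>) y :: 'a))\<^sup>2 \<partial>lborel)"
    let ?B = "(\<integral>y. Hf g lam (radf (Ps P a L \<xi>) (y::'a)) \<partial>lborel)"
    have A: "?A \<le> M" using M0[of \<xi>] \<xi> Kc unfolding M_def by auto
    have B: "?B \<le> - \<beta>" using BL[OF \<xi>] by (simp add: \<beta>_def)
    have TN: "T ^ DIM('a) > 0" using T by simp
    have "Jfun g lam (radf (PT P a L T \<xi>) :: 'a \<Rightarrow> real) = 1/2 * (T ^ DIM('a) / T\<^sup>2) * ?A + T ^ DIM('a) * ?B"
      by (rule fam_J[OF T g1])
    also have "\<dots> \<le> 1/2 * (T ^ DIM('a) / T\<^sup>2) * M + T ^ DIM('a) * (- \<beta>)"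
      using A B TN T by (intro add_mono mult_left_mono) auto
    also have "\<dots> = T ^ DIM('a) * (M / (2 * T\<^sup>2) - \<beta>)" by (simp add: field_simps)
    also have "\<dots> < 0" using TN key by (simp add: mult_pos_neg)
    finally show "Jfun g lam (radf (PT P a L T \<xi>) :: 'a \<Rightarrow> real) < 0" .
  qed
qed

end

lemma Hf_neg_exists:
  assumes g4: "\<exists>s0>0. Gprim g s0 > 0" and lam: "ereal lam < lambda0 g"
  shows "\<exists>a. Hf g lam a < 0"
proof -
  obtain s where s: "exp lam / 2 * s\<^sup>2 - Gprim g s < 0" using lambda0_neg[OF g4 lam] by blast
  have "Hf g lam (Fi s) < 0" using s by (simp add: Hf_def fcv_Fi)
  then show ?thesis by blast
qed

lemma Hf_even:
  assumes g1: "continuous_on UNIV g" and odd: "\<forall>s. g (- s) = - g s"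
  shows "Hf g lam (- t) = Hf g lam t"
  by (simp add: Hf_def fcv_odd Gprim_even[OF g1 odd])

lemma sing_real: "(1::real) \<in> sphere 0 1" by simp

theorem lemma3p1:
  fixes g :: "real \<Rightarrow> real" and lam :: real
  assumes N2: "DIM('a::euclidean_space) \<ge> 2"
    and g1: "continuous_on UNIV g"
    and g2: "((\<lambda>s. g s / s) \<longlongrightarrow> 0) (at 0)"
    and g3: "((\<lambda>s. \<bar>g s\<bar> / \<bar>s\<bar> powr (4 + 4 / real DIM('a) - 1)) \<longlongrightarrow> 0) at_infinity"
    and g4: "\<exists>s0>0. Gprim g s0 > 0"
    and lam: "ereal lam < lambda0 g"
  shows "(Gamma1 g lam :: (real \<Rightarrow> 'a \<Rightarrow> real) set) \<noteq> {} \<and>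
         ((\<forall>s. g (- s) = - g s) \<longrightarrow> DIM('k::euclidean_space) \<ge> 2 \<longrightarrow>
           (Gammak g lam :: ('k \<Rightarrow> 'a \<Rightarrow> real) set) \<noteq> {})"
proof -
  obtain a where Ha: "Hf g lam a < 0" using Hf_neg_exists[OF g4 lam] by blast
  have part1: "(Gamma1 g lam :: (real \<Rightarrow> 'a \<Rightarrow> real) set) \<noteq> {}"
  proof -
    interpret f1: fam "\<lambda>(t::real) (r::real). t" "\<lambda>t r. 0"
      by unfold_locales (auto intro!: continuous_intros derivative_eq_intros)
    have hK: "AE y in lborel. (y::'a) \<bullet> y < 1 \<longrightarrow> \<xi> \<noteq> 0" if "\<xi> \<in> {1::real}" for \<xi>
      using that by simp
    have hs: "Hf g lam (a * sgn \<xi>) = Hf g lam a" if "\<xi> \<in> {1::real}" for \<xi>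
      using that by simp
    obtain L T where T: "T > 0" and J: "\<forall>\<xi>\<in>{1::real}. Jfun g lam (radf (PT (\<lambda>t r. t) a L T \<xi>) :: 'a \<Rightarrow> real) < 0"
      using f1.fam_main[OF g1 compact_sing[of "1::real"] _ hK hs Ha] by auto
    define \<gamma> where "\<gamma> = (\<lambda>\<xi>::real. radf (PT (\<lambda>t r. t) a L T \<xi>) :: 'a \<Rightarrow> real)"
    have c: "cont_H1r {0..1} \<gamma>"
      unfolding \<gamma>_def by (rule cont_H1r_mono[OF f1.fam_cont[OF T]]) auto
    have z: "\<gamma> 0 = (\<lambda>x. 0)"
      unfolding \<gamma>_def radf_def[abs_def] PT_def using f1.Ps_zero by simp
    have "\<gamma> \<in> Gamma1 g lam" unfolding Gamma1_def using c z J by (simp add: \<gamma>_def)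
    then show ?thesis by blast
  qed
  have part2: "(Gammak g lam :: ('k \<Rightarrow> 'a \<Rightarrow> real) set) \<noteq> {}"
    if odd: "\<forall>s. g (- s) = - g s" and k2: "DIM('k::euclidean_space) \<ge> 2"
  proof -
    define k where "k = DIM('k)"
    have k1: "k \<ge> 1" unfolding k_def by simp
    obtain e where e: "bij_betw e {0..<k} (Basis :: 'k set)"
      using ex_bij_betw_nat_finite[OF finite_Basis] unfolding k_def by auto
    define Pk where "Pk = (\<lambda>(\<xi>::'k) (r::real). \<Sum>j<k. (\<xi> \<bullet> e j) * r ^ j)"
    define Pk' where "Pk' = (\<lambda>(\<xi>::'k) (r::real). \<Sum>j<k. (\<xi> \<bullet> e j) * (real j * r ^ (j - 1)))"
    interpret f2: fam Pk Pk'
    proof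
      fix \<xi> r
      show "(Pk \<xi> has_real_derivative Pk' \<xi> r) (at r)"
        unfolding Pk_def Pk'_def
        by (intro DERIV_sum DERIV_cmult) (simp add: DERIV_pow)
    next
      show "continuous_on UNIV (\<lambda>z. Pk (fst z) (snd z))" unfolding Pk_def by (intro continuous_intros)
    next
      show "continuous_on UNIV (\<lambda>z. Pk' (fst z) (snd z))" unfolding Pk'_def by (intro continuous_intros)
    next
      fix \<xi> r show "Pk (- \<xi>) r = - Pk \<xi> r" unfolding Pk_def by (simp add: sum_negf)
    qed
    have hK: "AE y in lborel. (y::'a) \<bullet> y < 1 \<longrightarrow> Pk \<xi> (y \<bullet> y) \<noteq> 0" if \<xi>: "\<xi> \<in> sphere 0 1" for \<xi>
    proof -
      have "\<xi> \<noteq> 0" using \<xi> by auto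
      then obtain b where b: "b \<in> Basis" "\<xi> \<bullet> b \<noteq> 0" using euclidean_all_zero_iff by blast
      have "b \<in> e ` {0..<k}" using e b(1) by (simp add: bij_betw_def)
      then obtain i where i0: "i \<in> {0..<k}" "b = e i" by (rule imageE)
      then have i: "i < k" "e i = b" by auto
      define Z where "Z = {r. (\<Sum>j\<le>k-1. (\<xi> \<bullet> e j) * r ^ j) = 0}"
      have fZ: "finite Z" unfolding Z_def
        by (rule polyfun_roots_finite[of _ i]) (use b i in auto)
      have kk: "{..<k} = {..k-1}" using k1 by auto
      have PZ: "Pk \<xi> r = 0 \<Longrightarrow> r \<in> Z" for r unfolding Pk_def Z_def kk by simp
      define N where "N = (\<Union>r\<in>Z. sphere (0::'a) (sqrt r))"
      have "N \<in> null_sets lborel" unfolding N_def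
        by (rule null_sets_UN'[OF countable_finite[OF fZ]]) (rule sphere_null)
      then have "AE y in lborel. y \<notin> N" by (rule AE_not_in)
      then show ?thesis
      proof (rule AE_mp, intro AE_I2 impI)
        fix y :: 'a assume yN: "y \<notin> N" and "y \<bullet> y < 1"
        show "Pk \<xi> (y \<bullet> y) \<noteq> 0"
        proof
          assume "Pk \<xi> (y \<bullet> y) = 0"
          then have "y \<bullet> y \<in> Z" by (rule PZ)
          moreover have "y \<in> sphere 0 (sqrt (y \<bullet> y))" by (simp add: norm_eq_sqrt_inner)
          ultimately have "y \<in> N" unfolding N_def by blast
          then show False using yN by simp
        qed
      qed
    qed
    have hs: "Hf g lam (a * sgn (Pk \<xi> r)) = Hf g lam a" if "Pk \<xi> r \<noteq> 0" for \<xi> r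
    proof (cases "Pk \<xi> r > 0")
      case True then show ?thesis by simp
    next
      case False
      then have "sgn (Pk \<xi> r) = -1" using that by (simp add: sgn_if)
      then show ?thesis using Hf_even[OF g1 odd, of lam a] by simp
    qed
    obtain L T where T: "T > 0" and J: "\<forall>\<xi>\<in>sphere (0::'k) 1. Jfun g lam (radf (PT Pk a L T \<xi>) :: 'a \<Rightarrow> real) < 0"
      using f2.fam_main[OF g1 compact_sphere[of "0::'k" 1] sphere_cball hK hs Ha] by blast
    define \<gamma> where "\<gamma> = (\<lambda>\<xi>::'k. radf (PT Pk a L T \<xi>) :: 'a \<Rightarrow> real)"
    have c: "cont_H1r (cball 0 1) \<gamma>" unfolding \<gamma>_def by (rule f2.fam_cont[OF T])
    have o: "\<gamma> (- \<xi>) = (\<lambda>x. - \<gamma> \<xi> x)" for \<xi>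
      unfolding \<gamma>_def radf_def[abs_def] PT_def using f2.Ps_odd by simp
    have "\<gamma> \<in> Gammak g lam" unfolding Gammak_def using c o J by (simp add: \<gamma>_def)
    then show ?thesis by blast
  qed
  show ?thesis using part1 part2 by blast
qed

end
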